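(* Let $(\mathcal V,g)$ be a spacetime and $\vec\xi$ a hypersurface-orthogonal Killing vector field, i.e. $\bm\xi\wedge d\bm\xi=0$. Then its Bel current satisfies $\bm j(\vec\xi)\wedge\bm\xi=0$, i.e. $\vec j(\vec\xi)$ is proportional to $\vec\xi$.
   Context: A spacetime is a 4-dimensional manifold with a Lorentzian metric $g$ of signature $(-,+,+,+)$, Levi-Civita connection $\nabla$, Riemann tensor $R_{\alpha\beta\lambda\mu}$. A Killing vector field satisfies $\nabla_{(\alpha}\xi_{\beta)}=0$; $\bm\xi$ is the associated 1-form. The Bel tensor is $$B_{\alpha\beta\lambda\mu}= R_{\alpha\rho\lambda\sigma} R_{\beta}{}^{\rho}{}_{\mu}{}^{\sigma} +R_{\alpha\rho\mu\sigma} R_{\beta}{}^{\rho}{}_{\lambda}{}^{\sigma} -\tfrac{1}{2}g_{\alpha\beta} R_{\rho\tau\lambda\sigma}R^{\rho\tau}{}_{\mu}{}^{\sigma} -\tfrac{1}{2}g_{\lambda\mu} R_{\alpha\rho\sigma\tau}R_{\beta}{}^{\rho\sigma\tau}+ \tfrac{1}{8}g_{\alpha\beta}g_{\lambda\mu} R_{\rho\tau\sigma\nu} R^{\rho\tau\sigma\nu}.$$ The Bel current of Killing vectors $\vec\xi_1,\vec\xi_2,\vec\xi_3$ is $j_\mu(\vec\xi_1,\vec\xi_2,\vec\xi_3)=B_{(\alpha\beta\lambda)\mu}\xi_1^\alpha\xi_2^\beta\xi_3^\lambda$, and $\vec j(\vec\xi)\equiv\vec j(\vec\xi,\vec\xi,\vec\xi)$;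 $\bm j$ denotes the associated 1-form. *)

theory Defs
  imports "HOL-Analysis.Analysis"
begin

text \<open>Local coordinate description of a spacetime: an open coordinate domain
  U of R^4 (index type 4) carrying a smooth Lorentzian metric g with
  components g x a b.\<close>

type_synonym pt = "real ^ 4"

definition pd :: "4 \<Rightarrow> (pt \<Rightarrow> real) \<Rightarrow> pt \<Rightarrow> real" where
  "pd i f x = deriv (\<lambda>t. f (x + t *\<^sub>R axis i 1)) 0"

fun iter_pd :: "4 list \<Rightarrow> (pt \<Rightarrow> real) \<Rightarrow> pt \<Rightarrow> real" where
  "iter_pd [] f = f"
| "iter_pd (i # is) f = pd i (iter_pd is f)"

definition smooth_on :: "pt set \<Rightarrow> (pt \<Rightarrow> real) \<Rightarrow> bool" where
  "smooth_on U f \<longleftrightarrow> (\<forall>is. iter_pd is f differentiable_on U)"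

definition metric_matrix :: "(pt \<Rightarrow> 4 \<Rightarrow> 4 \<Rightarrow> real) \<Rightarrow> pt \<Rightarrow> real ^ 4 ^ 4" where
  "metric_matrix g x = (\<chi> a b. g x a b)"

definition lorentzian_matrix :: "real ^ 4 ^ 4 \<Rightarrow> bool" where
  "lorentzian_matrix G \<longleftrightarrow> transpose G = G \<and>
     (\<exists>P :: real ^ 4 ^ 4. invertible P \<and>
        transpose P ** G ** P = (\<chi> i j. if i = j then (if i = 0 then -1 else 1) else 0))"

definition spacetime_chart :: "pt set \<Rightarrow> (pt \<Rightarrow> 4 \<Rightarrow> 4 \<Rightarrow> real) \<Rightarrow> bool" where
  "spacetime_chart U g \<longleftrightarrow> open U \<and> U \<noteq> {} \<and>
     (\<forall>a b. smooth_on U (\<lambda>x. g x a b)) \<and>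
     (\<forall>x\<in>U. lorentzian_matrix (metric_matrix g x))"

definition ginv :: "(pt \<Rightarrow> 4 \<Rightarrow> 4 \<Rightarrow> real) \<Rightarrow> pt \<Rightarrow> 4 \<Rightarrow> 4 \<Rightarrow> real" where
  "ginv g x a b = matrix_inv (metric_matrix g x) $ a $ b"

definition christoffel :: "(pt \<Rightarrow> 4 \<Rightarrow> 4 \<Rightarrow> real) \<Rightarrow> pt \<Rightarrow> 4 \<Rightarrow> 4 \<Rightarrow> 4 \<Rightarrow> real" where
  "christoffel g x a b c = (1/2) * (\<Sum>d\<in>UNIV. ginv g x a d *
      (pd b (\<lambda>y. g y d c) x + pd c (\<lambda>y. g y d b) x - pd d (\<lambda>y. g y b c) x))"

definition riemann_up :: "(pt \<Rightarrow> 4 \<Rightarrow> 4 \<Rightarrow> real) \<Rightarrow> pt \<Rightarrow> 4 \<Rightarrow> 4 \<Rightarrow> 4 \<Rightarrow> 4 \<Rightarrow> real" where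
  "riemann_up g x a b c d =
     pd c (\<lambda>y. christoffel g y a d b) x - pd d (\<lambda>y. christoffel g y a c b) x
     + (\<Sum>e\<in>UNIV. christoffel g x a c e * christoffel g x e d b
                  - christoffel g x a d e * christoffel g x e c b)"

definition riemann :: "(pt \<Rightarrow> 4 \<Rightarrow> 4 \<Rightarrow> real) \<Rightarrow> pt \<Rightarrow> 4 \<Rightarrow> 4 \<Rightarrow> 4 \<Rightarrow> 4 \<Rightarrow> real" where
  "riemann g x a b c d = (\<Sum>e\<in>UNIV. g x a e * riemann_up g x e b c d)"

definition bel :: "(pt \<Rightarrow> 4 \<Rightarrow> 4 \<Rightarrow> real) \<Rightarrow> pt \<Rightarrow> 4 \<Rightarrow> 4 \<Rightarrow> 4 \<Rightarrow> 4 \<Rightarrow> real" where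
  "bel g x al be la mu =
     (let R = riemann g x; h = ginv g x in
       (\<Sum>r\<in>UNIV. \<Sum>s\<in>UNIV. \<Sum>r'\<in>UNIV. \<Sum>s'\<in>UNIV. h r r' * h s s' *
          (R al r la s * R be r' mu s' + R al r mu s * R be r' la s'))
     - (1/2) * g x al be * (\<Sum>r\<in>UNIV. \<Sum>t\<in>UNIV. \<Sum>s\<in>UNIV. \<Sum>r'\<in>UNIV. \<Sum>t'\<in>UNIV. \<Sum>s'\<in>UNIV.
          h r r' * h t t' * h s s' * R r t la s * R r' t' mu s')
     - (1/2) * g x la mu * (\<Sum>r\<in>UNIV. \<Sum>s\<in>UNIV. \<Sum>t\<in>UNIV. \<Sum>r'\<in>UNIV. \<Sum>s'\<in>UNIV. \<Sum>t'\<in>UNIV.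
          h r r' * h s s' * h t t' * R al r s t * R be r' s' t')
     + (1/8) * g x al be * g x la mu *
         (\<Sum>r\<in>UNIV. \<Sum>t\<in>UNIV. \<Sum>s\<in>UNIV. \<Sum>n\<in>UNIV. \<Sum>r'\<in>UNIV. \<Sum>t'\<in>UNIV. \<Sum>s'\<in>UNIV. \<Sum>n'\<in>UNIV.
          h r r' * h t t' * h s s' * h n n' * R r t s n * R r' t' s' n'))"

definition bel_current3 :: "(pt \<Rightarrow> 4 \<Rightarrow> 4 \<Rightarrow> real) \<Rightarrow> (pt \<Rightarrow> 4 \<Rightarrow> real) \<Rightarrow> (pt \<Rightarrow> 4 \<Rightarrow> real)
     \<Rightarrow> (pt \<Rightarrow> 4 \<Rightarrow> real) \<Rightarrow> pt \<Rightarrow> 4 \<Rightarrow> real" where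
  "bel_current3 g v1 v2 v3 x mu =
     (\<Sum>a\<in>UNIV. \<Sum>b\<in>UNIV. \<Sum>c\<in>UNIV.
        (1/6) * (bel g x a b c mu + bel g x a c b mu + bel g x b a c mu
               + bel g x b c a mu + bel g x c a b mu + bel g x c b a mu)
        * v1 x a * v2 x b * v3 x c)"

definition bel_current :: "(pt \<Rightarrow> 4 \<Rightarrow> 4 \<Rightarrow> real) \<Rightarrow> (pt \<Rightarrow> 4 \<Rightarrow> real) \<Rightarrow> pt \<Rightarrow> 4 \<Rightarrow> real" where
  "bel_current g v = bel_current3 g v v v"

definition lower :: "(pt \<Rightarrow> 4 \<Rightarrow> 4 \<Rightarrow> real) \<Rightarrow> (pt \<Rightarrow> 4 \<Rightarrow> real) \<Rightarrow> pt \<Rightarrow> 4 \<Rightarrow> real" where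
  "lower g v x a = (\<Sum>b\<in>UNIV. g x a b * v x b)"

definition cov_deriv_form :: "(pt \<Rightarrow> 4 \<Rightarrow> 4 \<Rightarrow> real) \<Rightarrow> (pt \<Rightarrow> 4 \<Rightarrow> real) \<Rightarrow> pt \<Rightarrow> 4 \<Rightarrow> 4 \<Rightarrow> real" where
  "cov_deriv_form g w x a b = pd a (\<lambda>y. w y b) x - (\<Sum>c\<in>UNIV. christoffel g x c a b * w x c)"

definition killing :: "pt set \<Rightarrow> (pt \<Rightarrow> 4 \<Rightarrow> 4 \<Rightarrow> real) \<Rightarrow> (pt \<Rightarrow> 4 \<Rightarrow> real) \<Rightarrow> bool" where
  "killing U g v \<longleftrightarrow> (\<forall>a. smooth_on U (\<lambda>x. v x a)) \<and>
     (\<forall>x\<in>U. \<forall>a b. cov_deriv_form g (lower g v) x a b + cov_deriv_form g (lower g v) x b a = 0)"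

definition ext_d :: "(pt \<Rightarrow> 4 \<Rightarrow> real) \<Rightarrow> pt \<Rightarrow> 4 \<Rightarrow> 4 \<Rightarrow> real" where
  "ext_d w x a b = pd a (\<lambda>y. w y b) x - pd b (\<lambda>y. w y a) x"

text \<open>Components of w wedge F for a 1-form w and a 2-form F (up to a nonzero constant).\<close>
definition wedge12 :: "(pt \<Rightarrow> 4 \<Rightarrow> real) \<Rightarrow> (pt \<Rightarrow> 4 \<Rightarrow> 4 \<Rightarrow> real) \<Rightarrow> pt \<Rightarrow> 4 \<Rightarrow> 4 \<Rightarrow> 4 \<Rightarrow> real" where
  "wedge12 w F x a b c = w x a * F x b c + w x b * F x c a + w x c * F x a b"

text \<open>Components of w wedge u for 1-forms (up to a nonzero constant).\<close>
definition wedge11 :: "(pt \<Rightarrow> 4 \<Rightarrow> real) \<Rightarrow> (pt \<Rightarrow> 4 \<Rightarrow> real) \<Rightarrow> pt \<Rightarrow> 4 \<Rightarrow> 4 \<Rightarrow> real" where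
  "wedge11 w u x a b = w x a * u x b - w x b * u x a"

end

theory Submission
  imports Defs
begin

lemma line_DERIV:
  fixes f :: "pt \<Rightarrow> real"
  assumes "(f has_derivative f') (at (p + s *\<^sub>R v))"
  shows "((\<lambda>t. f (p + t *\<^sub>R v)) has_real_derivative f' v) (at s)"
proof -
  have l: "((\<lambda>t. p + t *\<^sub>R v) has_derivative (\<lambda>h. h *\<^sub>R v)) (at s)"
    by (auto intro!: derivative_eq_intros)
  have "((\<lambda>t. f (p + t *\<^sub>R v)) has_derivative (\<lambda>h. f' (h *\<^sub>R v))) (at s)"
    using has_derivative_compose[OF l assms] by (simp add: o_def)
  moreover have "(\<lambda>h. f' (h *\<^sub>R v)) = (\<lambda>h. f' v * h)"
    using has_derivative_bounded_linear[OF assms] linear_scale[of f']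
    by (simp add: bounded_linear.linear linear_cmul mult.commute)
  ultimately show ?thesis by (simp add: has_field_derivative_def)
qed

lemma pd_eq_frechet:
  assumes "(f has_derivative f') (at p)"
  shows "pd i f p = f' (axis i 1)"
proof -
  have "((\<lambda>t. f (p + t *\<^sub>R axis i 1)) has_real_derivative f' (axis i 1)) (at 0)"
    using line_DERIV[of f f' p 0] assms by simp
  then show ?thesis unfolding pd_def by (rule DERIV_imp_deriv)
qed

lemma pd_DERIV:
  assumes "f differentiable (at x)"
  shows "((\<lambda>t. f (x + t *\<^sub>R axis i 1)) has_real_derivative pd i f x) (at 0)"
proof -
  obtain f' where "(f has_derivative f') (at x)" using assms unfolding differentiable_def by blast
  then show ?thesis using line_DERIV[of f f' x 0] pd_eq_frechet by force
qed

lemma pd_unique: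
  "((\<lambda>t. f (x + t *\<^sub>R axis i 1)) has_real_derivative D) (at 0) \<Longrightarrow> pd i f x = D"
  unfolding pd_def by (rule DERIV_imp_deriv)

lemma pd_add:
  assumes "f differentiable (at x)" "h differentiable (at x)"
  shows "pd i (\<lambda>y. f y + h y) x = pd i f x + pd i h x"
  by (rule pd_unique) (intro DERIV_add pd_DERIV assms)

lemma pd_diff:
  assumes "f differentiable (at x)" "h differentiable (at x)"
  shows "pd i (\<lambda>y. f y - h y) x = pd i f x - pd i h x"
  by (rule pd_unique) (intro DERIV_diff pd_DERIV assms)

lemma pd_mult:
  assumes "f differentiable (at x)" "h differentiable (at x)"
  shows "pd i (\<lambda>y. f y * h y) x = pd i f x * h x + f x * pd i h x"
proof -
  have "((\<lambda>t. f (x + t *\<^sub>R axis i 1) * h (x + t *\<^sub>R axis i 1)) has_real_derivative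
     pd i f x * h (x + 0 *\<^sub>R axis i 1) + pd i h x * f (x + 0 *\<^sub>R axis i 1)) (at 0)"
    by (intro DERIV_mult pd_DERIV assms)
  then show ?thesis by (intro pd_unique) (simp add: algebra_simps)
qed

lemma pd_cmult:
  assumes "f differentiable (at x)"
  shows "pd i (\<lambda>y. c * f y) x = c * pd i f x"
  by (rule pd_unique) (intro DERIV_cmult pd_DERIV assms)

lemma pd_const: "pd i (\<lambda>y. c) x = 0"
  by (rule pd_unique) simp

lemma pd_sum:
  assumes "\<And>k. k \<in> S \<Longrightarrow> f k differentiable (at x)" "finite S"
  shows "pd i (\<lambda>y. \<Sum>k\<in>S. f k y) x = (\<Sum>k\<in>S. pd i (f k) x)"
  by (rule pd_unique) (intro DERIV_sum pd_DERIV assms)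

lemma pd_local:
  assumes "open U" "x \<in> U" "\<And>y. y \<in> U \<Longrightarrow> f y = h y"
  shows "pd i f x = pd i h x"
  unfolding pd_def
proof (rule deriv_cong_ev)
  obtain r where r: "r > 0" "ball x r \<subseteq> U" using assms(1,2) open_contains_ball by blast
  have "\<forall>\<^sub>F t in nhds 0. x + t *\<^sub>R axis i 1 \<in> U"
    unfolding eventually_nhds_metric
    by (rule exI[of _ r]) (use r in \<open>auto simp: dist_norm\<close>)
  then show "\<forall>\<^sub>F t in nhds 0. f (x + t *\<^sub>R axis i 1) = h (x + t *\<^sub>R axis i 1)"
    by eventually_elim (simp add: assms)
qed simp

lemma diff_local:
  assumes "open U" "x \<in> U" "\<And>y. y \<in> U \<Longrightarrow> f y = h y" "h differentiable (at x)"
  shows "f differentiable (at x)"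
proof -
  obtain h' where "(h has_derivative h') (at x)" using assms(4) unfolding differentiable_def by blast
  then have "(f has_derivative h') (at x)"
    by (rule has_derivative_transform_within_open[where s=U]) (use assms in auto)
  then show ?thesis unfolding differentiable_def by blast
qed

lemma schwarz_bound:
  fixes f :: "pt \<Rightarrow> real"
  assumes U: "open U" "x \<in> U" and fd: "\<And>y. y \<in> U \<Longrightarrow> f differentiable (at y)"
    and Gd: "(pd i f has_derivative G') (at x)" and e: "e > 0"
  shows "\<exists>d>0. \<forall>t. 0 < t \<and> t < d \<longrightarrow>
     \<bar>f (x + t *\<^sub>R axis j 1 + t *\<^sub>R axis i 1) - f (x + t *\<^sub>R axis i 1) - f (x + t *\<^sub>R axis j 1) + f x
        - t * t * G' (axis j 1)\<bar> \<le> 3 * e * (t * t)"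
proof -
  define G where "G = pd i f"
  have lin: "linear G'" using Gd has_derivative_linear by blast
  obtain d1 where d1: "d1 > 0" "\<And>y. norm (y - x) < d1 \<Longrightarrow> norm (G y - G x - G' (y - x)) \<le> e * norm (y - x)"
    using Gd e unfolding has_derivative_at_alt G_def by blast
  obtain r where r: "r > 0" "ball x r \<subseteq> U" using U open_contains_ball by blast
  define d where "d = min (d1/2) (r/2)"
  have "d > 0" using d1 r by (simp add: d_def)
  moreover have "\<bar>f (x + t *\<^sub>R axis j 1 + t *\<^sub>R axis i 1) - f (x + t *\<^sub>R axis i 1) - f (x + t *\<^sub>R axis j 1) + f x
        - t * t * G' (axis j 1)\<bar> \<le> 3 * e * (t * t)" if t: "0 < t" "t < d" for t
  proof -
    define p where "p = x + t *\<^sub>R axis j 1"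
    define psi where "psi s = f (p + s *\<^sub>R axis i 1) - f (x + s *\<^sub>R axis i 1) - s * t * G' (axis j 1)" for s
    have inU: "y \<in> U" if "norm (y - x) < r" for y using r that by (auto simp: dist_norm norm_minus_commute)
    have der: "DERIV psi s :> (G (p + s *\<^sub>R axis i 1) - G (x + s *\<^sub>R axis i 1) - t * G' (axis j 1))"
      if s: "0 \<le> s" "s \<le> t" for s
    proof -
      have n1: "norm (p + s *\<^sub>R axis i 1 - x) \<le> s + t"
        unfolding p_def using norm_triangle_ineq[of "t *\<^sub>R axis j (1::real)" "s *\<^sub>R axis i 1"] s t
        by (simp add: add.commute)
      have "p + s *\<^sub>R axis i 1 \<in> U" using n1 s t by (intro inU) (simp add: d_def)
      then obtain f1 where f1: "(f has_derivative f1) (at (p + s *\<^sub>R axis i 1))"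
        using fd unfolding differentiable_def by blast
      have "x + s *\<^sub>R axis i 1 \<in> U" using s t by (intro inU) (simp add: d_def)
      then obtain f2 where f2: "(f has_derivative f2) (at (x + s *\<^sub>R axis i 1))"
        using fd unfolding differentiable_def by blast
      have "DERIV psi s :> (f1 (axis i 1) - f2 (axis i 1) - t * G' (axis j 1))"
        unfolding psi_def[abs_def]
        by (intro DERIV_diff line_DERIV f1 f2 DERIV_cmult_right[where f="\<lambda>s. s" and D=1, simplified, THEN DERIV_cong])
           (auto intro!: derivative_eq_intros)
      moreover have "f1 (axis i 1) = G (p + s *\<^sub>R axis i 1)" "f2 (axis i 1) = G (x + s *\<^sub>R axis i 1)"
        using pd_eq_frechet[OF f1] pd_eq_frechet[OF f2] by (simp_all add: G_def)
      ultimately show ?thesis by simp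
    qed
    obtain z where z: "0 < z" "z < t" "psi t - psi 0 = (t - 0) * (G (p + z *\<^sub>R axis i 1) - G (x + z *\<^sub>R axis i 1) - t * G' (axis j 1))"
      using MVT2[of 0 t psi, OF t(1) der] by blast
    have nA: "norm (p + z *\<^sub>R axis i 1 - x) \<le> z + t"
      unfolding p_def using norm_triangle_ineq[of "t *\<^sub>R axis j (1::real)" "z *\<^sub>R axis i 1"] z t
      by (simp add: add.commute)
    have nB: "norm (x + z *\<^sub>R axis i 1 - x) = z" using z by simp
    have bA: "norm (G (p + z *\<^sub>R axis i 1) - G x - G' (p + z *\<^sub>R axis i 1 - x)) \<le> e * (z + t)"
      using d1(2)[of "p + z *\<^sub>R axis i 1"] nA z t e
      by (smt (verit, ccfv_SIG) d_def field_sum_of_halves mult_left_mono)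
    have bB: "norm (G (x + z *\<^sub>R axis i 1) - G x - G' (x + z *\<^sub>R axis i 1 - x)) \<le> e * z"
      using d1(2)[of "x + z *\<^sub>R axis i 1"] nB z t e by (simp add: d_def)
    have lineq: "G' (p + z *\<^sub>R axis i 1 - x) - G' (x + z *\<^sub>R axis i 1 - x) = t * G' (axis j 1)"
      unfolding p_def using lin by (simp add: linear_add linear_scale algebra_simps)
    have "\<bar>G (p + z *\<^sub>R axis i 1) - G (x + z *\<^sub>R axis i 1) - t * G' (axis j 1)\<bar> \<le> e * (z + t) + e * z"
      using bA bB lineq by (simp add: abs_le_iff)
    also have "\<dots> \<le> 3 * e * t" using z e by (simp add: algebra_simps)
    finally have "\<bar>psi t - psi 0\<bar> \<le> t * (3 * e * t)"
      using z t by (simp add: abs_mult mult_left_mono)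
    moreover have "psi t - psi 0 = f (x + t *\<^sub>R axis j 1 + t *\<^sub>R axis i 1) - f (x + t *\<^sub>R axis i 1) - f (x + t *\<^sub>R axis j 1) + f x
        - t * t * G' (axis j 1)" unfolding psi_def p_def by simp
    ultimately show ?thesis by (simp add: algebra_simps)
  qed
  ultimately show ?thesis by blast
qed

lemma schwarz:
  fixes f :: "pt \<Rightarrow> real"
  assumes U: "open U" "x \<in> U" and fd: "\<And>y. y \<in> U \<Longrightarrow> f differentiable (at y)"
    and di: "pd i f differentiable (at x)" and dj: "pd j f differentiable (at x)"
  shows "pd j (pd i f) x = pd i (pd j f) x"
proof (rule ccontr)
  assume ne: "pd j (pd i f) x \<noteq> pd i (pd j f) x"
  obtain Gi where Gi: "(pd i f has_derivative Gi) (at x)" using di unfolding differentiable_def by blast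
  obtain Gj where Gj: "(pd j f has_derivative Gj) (at x)" using dj unfolding differentiable_def by blast
  have A: "Gi (axis j 1) = pd j (pd i f) x" using pd_eq_frechet[OF Gi] by simp
  have B: "Gj (axis i 1) = pd i (pd j f) x" using pd_eq_frechet[OF Gj] by simp
  define e where "e = \<bar>pd j (pd i f) x - pd i (pd j f) x\<bar> / 7"
  have e: "e > 0" using ne by (simp add: e_def)
  obtain d1 where d1: "d1 > 0" "\<forall>t. 0 < t \<and> t < d1 \<longrightarrow>
     \<bar>f (x + t *\<^sub>R axis j 1 + t *\<^sub>R axis i 1) - f (x + t *\<^sub>R axis i 1) - f (x + t *\<^sub>R axis j 1) + f x
        - t * t * Gi (axis j 1)\<bar> \<le> 3 * e * (t * t)"
    using schwarz_bound[OF U fd Gi e, of j] by blast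
  obtain d2 where d2: "d2 > 0" "\<forall>t. 0 < t \<and> t < d2 \<longrightarrow>
     \<bar>f (x + t *\<^sub>R axis i 1 + t *\<^sub>R axis j 1) - f (x + t *\<^sub>R axis j 1) - f (x + t *\<^sub>R axis i 1) + f x
        - t * t * Gj (axis i 1)\<bar> \<le> 3 * e * (t * t)"
    using schwarz_bound[OF U fd Gj e, of i] by blast
  define t where "t = min d1 d2 / 2"
  have t: "0 < t" "t < d1" "t < d2" using d1 d2 by (auto simp: t_def)
  have eq: "x + t *\<^sub>R axis i 1 + t *\<^sub>R axis j 1 = x + t *\<^sub>R axis j 1 + t *\<^sub>R axis i 1" by (simp add: add_ac)
  define D where "D = f (x + t *\<^sub>R axis j 1 + t *\<^sub>R axis i 1) - f (x + t *\<^sub>R axis i 1) - f (x + t *\<^sub>R axis j 1) + f x"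
  have h1: "\<bar>D - t * t * Gi (axis j 1)\<bar> \<le> 3 * e * (t * t)"
    using d1(2) t unfolding D_def by blast
  have h2: "\<bar>D - t * t * Gj (axis i 1)\<bar> \<le> 3 * e * (t * t)"
  proof -
    have "\<bar>f (x + t *\<^sub>R axis i 1 + t *\<^sub>R axis j 1) - f (x + t *\<^sub>R axis j 1) - f (x + t *\<^sub>R axis i 1) + f x
        - t * t * Gj (axis i 1)\<bar> \<le> 3 * e * (t * t)" using d2(2) t by blast
    moreover have "f (x + t *\<^sub>R axis i 1 + t *\<^sub>R axis j 1) = f (x + t *\<^sub>R axis j 1 + t *\<^sub>R axis i 1)"
      by (simp only: eq)
    ultimately show ?thesis unfolding D_def by simp
  qed
  have "\<bar>(t * t) * (Gi (axis j 1) - Gj (axis i 1))\<bar> \<le> (t * t) * (6 * e)"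
  proof -
    have "t * t * (6 * e) = 2 * (3 * e * (t * t))" by simp
    then show ?thesis using h1 h2 unfolding abs_le_iff by (simp only: right_diff_distrib) linarith
  qed
  then have "(t * t) * \<bar>Gi (axis j 1) - Gj (axis i 1)\<bar> \<le> (t * t) * (6 * e)"
    by (simp only: abs_mult abs_mult_self_eq)
  then have "\<bar>Gi (axis j 1) - Gj (axis i 1)\<bar> \<le> 6 * e" using t
    by (meson mult_le_cancel_left_pos mult_pos_pos)
  then show False using A B e by (simp add: e_def)
qed

lemma differentiable_prod_at:
  fixes f :: "'i \<Rightarrow> pt \<Rightarrow> real"
  assumes "\<And>i. i \<in> I \<Longrightarrow> f i differentiable (at x)"
  shows "(\<lambda>y. \<Prod>i\<in>I. f i y) differentiable (at x)"
proof -
  obtain f' where "\<And>i. i \<in> I \<Longrightarrow> (f i has_derivative f' i) (at x)"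
    using assms unfolding differentiable_def by metis
  then show ?thesis unfolding differentiable_def using has_derivative_prod by blast
qed

lemma det_differentiable:
  fixes M :: "pt \<Rightarrow> real^4^4"
  assumes "\<And>a b. (\<lambda>y. M y $ a $ b) differentiable (at x)"
  shows "(\<lambda>y. det (M y)) differentiable (at x)"
  unfolding det_def
  by (intro differentiable_sum ballI differentiable_mult differentiable_const differentiable_prod_at assms) simp

lemma invertible_inv:
  assumes "invertible (A::real^4^4)"
  shows "A ** matrix_inv A = mat 1" "matrix_inv A ** A = mat 1"
  using someI_ex[OF assms[unfolded invertible_def]] unfolding matrix_inv_def by auto

lemma lorentzian_det:
  assumes "lorentzian_matrix G"
  shows "det G \<noteq> 0"
proof -
  obtain P :: "real^4^4" where P: "transpose P ** G ** P = (\<chi> i j. if i = j then (if i = 0 then -1 else 1) else 0)"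
    using assms unfolding lorentzian_matrix_def by blast
  have "det (transpose P ** G ** P) = det P * det G * det P" by (simp add: det_mul)
  moreover have "det ((\<chi> i j. if i = j then (if i = 0 then -1 else 1) else 0) :: real^4^4) \<noteq> 0"
    by (subst det_diagonal) auto
  ultimately show ?thesis using P by auto
qed

lemma ginv_cramer:
  assumes "det A \<noteq> 0"
  shows "matrix_inv (A::real^4^4) $ k $ j = det (\<chi> a b. if b = k then axis j 1 $ a else A $ a $ b) / det A"
proof -
  have inv: "invertible A" using assms invertible_det_nz by blast
  have "A *v (matrix_inv A *v axis j 1) = axis j 1"
    using invertible_inv(1)[OF inv] by (simp add: matrix_vector_mul_assoc)
  then have "matrix_inv A *v axis j 1 = (\<chi> k. det (\<chi> a b. if b = k then axis j 1 $ a else A $ a $ b) / det A)"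
    using cramer[OF assms] by blast
  then show ?thesis by (simp add: matrix_vector_mult_basis column_def fun_eq_iff)
qed



lemma smooth_d0: "smooth_on U f \<Longrightarrow> open U \<Longrightarrow> y \<in> U \<Longrightarrow> f differentiable (at y)"
  unfolding smooth_on_def
  by (drule spec[of _ "[]"]) (simp add: differentiable_on_eq_differentiable_at)
lemma smooth_d1: "smooth_on U f \<Longrightarrow> open U \<Longrightarrow> y \<in> U \<Longrightarrow> pd i f differentiable (at y)"
  unfolding smooth_on_def
  by (drule spec[of _ "[i]"]) (simp add: differentiable_on_eq_differentiable_at)
lemma smooth_d2: "smooth_on U f \<Longrightarrow> open U \<Longrightarrow> y \<in> U \<Longrightarrow> pd j (pd i f) differentiable (at y)"
  unfolding smooth_on_def
  by (drule spec[of _ "[j,i]"]) (simp add: differentiable_on_eq_differentiable_at)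

lemma delta_sum: "(\<Sum>d\<in>UNIV. (if (a::'a::finite) = d then 1 else 0) * X d) = (X a :: real)"
  proof -
  have "(\<Sum>d\<in>UNIV. (if a = d then 1 else 0) * X d) = (\<Sum>d\<in>UNIV. if a = d then X d else 0)"
    by (intro sum.cong) auto
  also have "\<dots> = X a" by (subst sum.delta') auto
  finally show ?thesis .
qed

locale chart =
  fixes U :: "pt set" and g :: "pt \<Rightarrow> 4 \<Rightarrow> 4 \<Rightarrow> real"
  assumes sc: "spacetime_chart U g"
begin

lemma openU: "open U" using sc unfolding spacetime_chart_def by blast

lemma g_sym: "y \<in> U \<Longrightarrow> g y a b = g y b a"
proof -
  assume y: "y \<in> U"
  have "transpose (metric_matrix g y) = metric_matrix g y"
    using sc y unfolding spacetime_chart_def lorentzian_matrix_def by blast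
  then have "transpose (metric_matrix g y) $ b $ a = metric_matrix g y $ b $ a" by simp
  then show ?thesis by (simp add: transpose_def metric_matrix_def)
qed

lemma g_sym_fun: "y \<in> U \<Longrightarrow> pd i (\<lambda>z. g z a b) y = pd i (\<lambda>z. g z b a) y"
  by (rule pd_local[OF openU]) (auto simp: g_sym)

lemma gd0: "y \<in> U \<Longrightarrow> (\<lambda>z. g z a b) differentiable (at y)"
  using sc smooth_d0 openU unfolding spacetime_chart_def by blast
lemma gd1: "y \<in> U \<Longrightarrow> pd i (\<lambda>z. g z a b) differentiable (at y)"
  using sc smooth_d1 openU unfolding spacetime_chart_def by blast
lemma gd2: "y \<in> U \<Longrightarrow> pd j (pd i (\<lambda>z. g z a b)) differentiable (at y)"
  using sc smooth_d2 openU unfolding spacetime_chart_def by blast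

lemma g_schwarz: "y \<in> U \<Longrightarrow> pd j (pd i (\<lambda>z. g z a b)) y = pd i (pd j (\<lambda>z. g z a b)) y"
  by (rule schwarz[OF openU]) (auto intro: gd0 gd1)

lemma detne: "y \<in> U \<Longrightarrow> det (metric_matrix g y) \<noteq> 0"
  using sc lorentzian_det unfolding spacetime_chart_def by blast

lemma g_ginv: "y \<in> U \<Longrightarrow> (\<Sum>b\<in>UNIV. g y a b * ginv g y b c) = (if a = c then 1 else 0)"
proof -
  assume y: "y \<in> U"
  have "metric_matrix g y ** matrix_inv (metric_matrix g y) = mat 1"
    using invertible_inv(1) detne[OF y] invertible_det_nz by blast
  then have "(metric_matrix g y ** matrix_inv (metric_matrix g y)) $ a $ c = mat 1 $ a $ c" by simp
  then show ?thesis by (simp add: matrix_matrix_mult_def mat_def metric_matrix_def ginv_def)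
qed

lemma ginv_g: "y \<in> U \<Longrightarrow> (\<Sum>b\<in>UNIV. ginv g y a b * g y b c) = (if a = c then 1 else 0)"
proof -
  assume y: "y \<in> U"
  have "matrix_inv (metric_matrix g y) ** metric_matrix g y = mat 1"
    using invertible_inv(2) detne[OF y] invertible_det_nz by blast
  then have "(matrix_inv (metric_matrix g y) ** metric_matrix g y) $ a $ c = mat 1 $ a $ c" by simp
  then show ?thesis by (simp add: matrix_matrix_mult_def mat_def metric_matrix_def ginv_def)
qed

lemma ginv_sym: "y \<in> U \<Longrightarrow> ginv g y a b = ginv g y b a"
proof -
  assume y: "y \<in> U"
  define G where "G = metric_matrix g y"
  define H where "H = matrix_inv G"
  have inv: "invertible G" using detne[OF y] invertible_det_nz G_def by blast
  have tG: "transpose G = G" using sc y unfolding spacetime_chart_def lorentzian_matrix_def G_def by blast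
  have "G ** transpose H = mat 1"
    using invertible_inv(2)[OF inv] tG by (metis H_def matrix_transpose_mul transpose_mat)
  then have "transpose H = H"
    using invertible_inv(2)[OF inv] by (metis H_def matrix_mul_assoc matrix_mul_lid matrix_mul_rid)
  then have "transpose H $ b $ a = H $ b $ a" by simp
  then show ?thesis unfolding ginv_def G_def[symmetric] H_def[symmetric]
    by (simp add: transpose_def)
qed

lemma ginv_d: "y \<in> U \<Longrightarrow> (\<lambda>z. ginv g z a b) differentiable (at y)"
proof -
  assume y: "y \<in> U"
  show ?thesis
  proof (rule diff_local[OF openU y])
    show "ginv g z a b = det (\<chi> p q. if q = a then axis b 1 $ p else metric_matrix g z $ p $ q) / det (metric_matrix g z)"
      if "z \<in> U" for z unfolding ginv_def using ginv_cramer detne that by blast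
    show "(\<lambda>z. det (\<chi> p q. if q = a then axis b 1 $ p else metric_matrix g z $ p $ q) / det (metric_matrix g z)) differentiable (at y)"
      using detne[OF y]
      apply (intro differentiable_divide det_differentiable)
      subgoal for p q by (cases "q = a") (auto simp: metric_matrix_def gd0[OF y])
      by (auto simp: metric_matrix_def gd0[OF y])
  qed
qed

lemma chr_sym: "y \<in> U \<Longrightarrow> christoffel g y a b c = christoffel g y a c b"
proof -
  assume y: "y \<in> U"
  have "\<And>d. pd d (\<lambda>z. g z c b) y = pd d (\<lambda>z. g z b c) y" by (rule g_sym_fun[OF y])
  then show ?thesis unfolding christoffel_def by (simp add: algebra_simps)
qed

lemma chr_d: "y \<in> U \<Longrightarrow> (\<lambda>z. christoffel g z a b c) differentiable (at y)"
  unfolding christoffel_def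
  by (intro differentiable_mult differentiable_const differentiable_sum ballI differentiable_add differentiable_diff
      ginv_d gd1) auto

definition CL where "CL y a b c = (\<Sum>e\<in>UNIV. g y a e * christoffel g y e b c)"

lemma CL_formula: "y \<in> U \<Longrightarrow> CL y a b c =
   1/2 * (pd b (\<lambda>z. g z a c) y + pd c (\<lambda>z. g z a b) y - pd a (\<lambda>z. g z b c) y)"
proof -
  assume y: "y \<in> U"
  define X where "X d = pd b (\<lambda>z. g z d c) y + pd c (\<lambda>z. g z d b) y - pd d (\<lambda>z. g z b c) y" for d
  have "CL y a b c = (\<Sum>e\<in>UNIV. \<Sum>d\<in>UNIV. 1/2 * (g y a e * ginv g y e d * X d))"
    unfolding CL_def christoffel_def X_def by (simp add: sum_distrib_left mult_ac)
  also have "\<dots> = (\<Sum>d\<in>UNIV. \<Sum>e\<in>UNIV. 1/2 * (g y a e * ginv g y e d * X d))"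
    by (rule sum.swap)
  also have "\<dots> = (\<Sum>d\<in>UNIV. (\<Sum>e\<in>UNIV. g y a e * ginv g y e d) * (1/2 * X d))"
    by (simp add: sum_distrib_left sum_distrib_right mult_ac)
  also have "\<dots> = 1/2 * X a" by (simp only: g_ginv[OF y] delta_sum)
  finally show ?thesis unfolding X_def .
qed

lemma chr_from_CL: "y \<in> U \<Longrightarrow> christoffel g y e b c = (\<Sum>f\<in>UNIV. ginv g y e f * CL y f b c)"
proof -
  assume y: "y \<in> U"
  have "(\<Sum>f\<in>UNIV. ginv g y e f * CL y f b c) = (\<Sum>f\<in>UNIV. \<Sum>k\<in>UNIV. ginv g y e f * g y f k * christoffel g y k b c)"
    unfolding CL_def by (simp add: sum_distrib_left mult_ac)
  also have "\<dots> = (\<Sum>k\<in>UNIV. \<Sum>f\<in>UNIV. ginv g y e f * g y f k * christoffel g y k b c)"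
    by (rule sum.swap)
  also have "\<dots> = (\<Sum>k\<in>UNIV. (\<Sum>f\<in>UNIV. ginv g y e f * g y f k) * christoffel g y k b c)"
    by (simp add: sum_distrib_right)
  also have "\<dots> = christoffel g y e b c" by (simp add: ginv_g[OF y] delta_sum)
  finally show ?thesis by simp
qed

lemma CLG_swap: "y \<in> U \<Longrightarrow> (\<Sum>e\<in>UNIV. CL y e p q * christoffel g y e r s) = (\<Sum>e\<in>UNIV. CL y e r s * christoffel g y e p q)"
proof -
  assume y: "y \<in> U"
  have "(\<Sum>e\<in>UNIV. CL y e p q * christoffel g y e r s) = (\<Sum>e\<in>UNIV. \<Sum>f\<in>UNIV. CL y e p q * ginv g y e f * CL y f r s)"
    by (simp add: chr_from_CL[OF y] sum_distrib_left mult_ac)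
  also have "\<dots> = (\<Sum>f\<in>UNIV. \<Sum>e\<in>UNIV. CL y e p q * ginv g y e f * CL y f r s)"
    by (rule sum.swap)
  also have "\<dots> = (\<Sum>f\<in>UNIV. CL y f r s * (\<Sum>e\<in>UNIV. ginv g y f e * CL y e p q))"
    apply (intro sum.cong refl)
    subgoal for f by (simp add: sum_distrib_left mult_ac ginv_sym[OF y, of _ f])
    done
  also have "\<dots> = (\<Sum>f\<in>UNIV. CL y f r s * christoffel g y f p q)"
    by (simp add: chr_from_CL[OF y])
  finally show ?thesis .
qed

lemma dg_CL: "y \<in> U \<Longrightarrow> pd c (\<lambda>z. g z a e) y = CL y a c e + CL y e c a"
  using g_sym_fun[of y e a c] g_sym_fun[of y a c e] g_sym_fun[of y c e a]
  by (simp add: CL_formula algebra_simps)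

end



context chart begin

abbreviation "S2 y c d a b \<equiv> pd c (pd d (\<lambda>z. g z a b)) y"

lemma pd_gchr: "x \<in> U \<Longrightarrow> (\<Sum>e\<in>UNIV. g x a e * pd c (\<lambda>z. christoffel g z e d b) x) =
   pd c (\<lambda>z. CL z a d b) x - (\<Sum>e\<in>UNIV. pd c (\<lambda>z. g z a e) x * christoffel g x e d b)"
proof -
  assume x: "x \<in> U"
  have "pd c (\<lambda>z. CL z a d b) x = (\<Sum>e\<in>UNIV. pd c (\<lambda>z. g z a e * christoffel g z e d b) x)"
    unfolding CL_def by (rule pd_sum) (auto intro!: differentiable_mult gd0 chr_d x)
  also have "\<dots> = (\<Sum>e\<in>UNIV. pd c (\<lambda>z. g z a e) x * christoffel g x e d b + g x a e * pd c (\<lambda>z. christoffel g z e d b) x)"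
    by (intro sum.cong refl pd_mult gd0 chr_d x)
  finally show ?thesis by (simp add: sum.distrib)
qed

lemma pd_CL: "x \<in> U \<Longrightarrow> pd c (\<lambda>z. CL z a d b) x = 1/2 * (S2 x c d a b + S2 x c b a d - S2 x c a d b)"
proof -
  assume x: "x \<in> U"
  have "pd c (\<lambda>z. CL z a d b) x = pd c (\<lambda>z. 1/2 * (pd d (\<lambda>z. g z a b) z + pd b (\<lambda>z. g z a d) z - pd a (\<lambda>z. g z d b) z)) x"
    by (rule pd_local[OF openU x]) (simp add: CL_formula)
  also have "\<dots> = 1/2 * pd c (\<lambda>z. pd d (\<lambda>z. g z a b) z + pd b (\<lambda>z. g z a d) z - pd a (\<lambda>z. g z d b) z) x"
    by (rule pd_cmult) (intro differentiable_diff differentiable_add gd1 x)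
  also have "pd c (\<lambda>z. pd d (\<lambda>z. g z a b) z + pd b (\<lambda>z. g z a d) z - pd a (\<lambda>z. g z d b) z) x
     = pd c (\<lambda>z. pd d (\<lambda>z. g z a b) z + pd b (\<lambda>z. g z a d) z) x - S2 x c a d b"
    by (rule pd_diff) (intro differentiable_diff differentiable_add gd1 x)+
  also have "pd c (\<lambda>z. pd d (\<lambda>z. g z a b) z + pd b (\<lambda>z. g z a d) z) x = S2 x c d a b + S2 x c b a d"
    by (rule pd_add) (intro gd1 x)+
  finally show ?thesis .
qed

lemma gGG: "(\<Sum>e\<in>UNIV. g x a e * (\<Sum>f\<in>UNIV. christoffel g x e c f * christoffel g x f d b)) =
   (\<Sum>f\<in>UNIV. CL x a c f * christoffel g x f d b)"
proof -
  have "(\<Sum>e\<in>UNIV. g x a e * (\<Sum>f\<in>UNIV. christoffel g x e c f * christoffel g x f d b)) =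
     (\<Sum>e\<in>UNIV. \<Sum>f\<in>UNIV. g x a e * christoffel g x e c f * christoffel g x f d b)"
    by (simp add: sum_distrib_left mult_ac)
  also have "\<dots> = (\<Sum>f\<in>UNIV. \<Sum>e\<in>UNIV. g x a e * christoffel g x e c f * christoffel g x f d b)"
    by (rule sum.swap)
  also have "\<dots> = (\<Sum>f\<in>UNIV. CL x a c f * christoffel g x f d b)"
    unfolding CL_def by (simp add: sum_distrib_right)
  finally show ?thesis .
qed

lemma riemann_formula: "x \<in> U \<Longrightarrow> riemann g x a b c d =
   1/2 * (S2 x c b a d - S2 x c a d b - S2 x d b a c + S2 x d a c b)
   - (\<Sum>e\<in>UNIV. CL x e c a * christoffel g x e d b) + (\<Sum>e\<in>UNIV. CL x e d a * christoffel g x e c b)"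
proof -
  assume x: "x \<in> U"
  have A: "riemann g x a b c d = (\<Sum>e\<in>UNIV. g x a e * pd c (\<lambda>z. christoffel g z e d b) x)
     - (\<Sum>e\<in>UNIV. g x a e * pd d (\<lambda>z. christoffel g z e c b) x)
     + (\<Sum>f\<in>UNIV. CL x a c f * christoffel g x f d b) - (\<Sum>f\<in>UNIV. CL x a d f * christoffel g x f c b)"
    unfolding riemann_def riemann_up_def gGG[symmetric]
    by (simp add: algebra_simps sum.distrib sum_subtractf sum_distrib_left)
  have B: "(\<Sum>e\<in>UNIV. pd p (\<lambda>z. g z a e) x * christoffel g x e q b) =
      (\<Sum>e\<in>UNIV. CL x a p e * christoffel g x e q b) + (\<Sum>e\<in>UNIV. CL x e p a * christoffel g x e q b)" for p q
    by (simp add: dg_CL[OF x] algebra_simps sum.distrib)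
  have C: "S2 x c d a b = S2 x d c a b" by (rule g_schwarz[OF x])
  show ?thesis
    unfolding A pd_gchr[OF x] pd_CL[OF x] B using C by (simp add: algebra_simps)
qed

lemma S2_sym: "x \<in> U \<Longrightarrow> S2 x p q r s = S2 x p q s r"
  by (rule pd_local[OF openU]) (simp_all add: g_sym_fun)

lemma riemann_antisym1: "x \<in> U \<Longrightarrow> riemann g x a b c d = - riemann g x b a c d"
proof -
  assume x: "x \<in> U"
  have s: "S2 x p q r s = S2 x p q s r" for p q r s by (rule S2_sym[OF x])
  show ?thesis unfolding riemann_formula[OF x]
    using s[of c a b d] s[of c b d a] s[of d a b c] s[of d b c a]
      CLG_swap[OF x, of c a d b] CLG_swap[OF x, of d a c b]
    by (simp add: algebra_simps)
qed

lemma riemann_antisym2: "riemann g x a b c d = - riemann g x a b d c"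
  unfolding riemann_def riemann_up_def by (simp add: algebra_simps sum_subtractf sum.distrib sum_distrib_left)

lemma bianchi_up: "x \<in> U \<Longrightarrow> riemann_up g x a b c d + riemann_up g x a c d b + riemann_up g x a d b c = 0"
proof -
  assume x: "x \<in> U"
  have p: "pd p (\<lambda>z. christoffel g z a q r) x = pd p (\<lambda>z. christoffel g z a r q) x" for p q r
    by (rule pd_local[OF openU x]) (simp add: chr_sym)
  have s: "(\<Sum>e\<in>UNIV. christoffel g x a p e * christoffel g x e q r) = (\<Sum>e\<in>UNIV. christoffel g x a p e * christoffel g x e r q)" for p q r
    by (intro sum.cong refl) (simp add: chr_sym[OF x])
  show ?thesis unfolding riemann_up_def
    using p[of c d b] p[of d c b] p[of b d c] s[of c d b] s[of d c b] s[of b d c]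
    by (simp add: algebra_simps sum_subtractf)
qed

lemma bianchi: "x \<in> U \<Longrightarrow> riemann g x a b c d + riemann g x a c d b + riemann g x a d b c = 0"
proof -
  assume x: "x \<in> U"
  have "riemann g x a b c d + riemann g x a c d b + riemann g x a d b c =
     (\<Sum>e\<in>UNIV. g x a e * (riemann_up g x e b c d + riemann_up g x e c d b + riemann_up g x e d b c))"
    unfolding riemann_def by (simp add: algebra_simps sum.distrib)
  also have "\<dots> = 0" by (simp add: bianchi_up[OF x])
  finally show ?thesis .
qed

lemma riemann_pair: "x \<in> U \<Longrightarrow> riemann g x a b c d = riemann g x c d a b"
proof -
  assume x: "x \<in> U"
  note A1 = riemann_antisym1[OF x] and A2 = riemann_antisym2[of x] and B = bianchi[OF x]
  show ?thesis
    using B[of a b c d] B[of b c d a] B[of c d a b] B[of d a b c]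
      A1[of b c d a] A1[of b d a c] A1[of b a c d] A1[of d a b c] A1[of d b c a] A1[of d c a b]
      A1[of c a b d] A1[of c b d a] A2[of a c d b] A2[of a d b c] A2[of c a b d] A2[of b c d a]
      A2[of b d a c] A2[of d a b c] A2[of d b c a] A2[of c b d a] A1[of a c b d] A1[of a d c b]
      A2[of c d b a] A2[of c d a b]
    by linarith
qed

end



lemma pd_neg: "f differentiable (at x) \<Longrightarrow> pd i (\<lambda>y. - f y) x = - pd i f x"
  by (rule pd_unique) (intro DERIV_minus pd_DERIV)

locale kchart = chart +
  fixes xi :: "pt \<Rightarrow> 4 \<Rightarrow> real"
  assumes kil: "killing U g xi"
    and hso: "\<forall>x\<in>U. \<forall>a b c. wedge12 (lower g xi) (ext_d (lower g xi)) x a b c = 0"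
begin

abbreviation "om \<equiv> lower g xi"
abbreviation "Fk \<equiv> cov_deriv_form g (lower g xi)"

lemma xid0: "y \<in> U \<Longrightarrow> (\<lambda>z. xi z a) differentiable (at y)"
  using kil smooth_d0 openU unfolding killing_def by blast
lemma xid1: "y \<in> U \<Longrightarrow> pd i (\<lambda>z. xi z a) differentiable (at y)"
  using kil smooth_d1 openU unfolding killing_def by blast
lemma xi_schwarz: "y \<in> U \<Longrightarrow> pd j (pd i (\<lambda>z. xi z a)) y = pd i (pd j (\<lambda>z. xi z a)) y"
  by (rule schwarz[OF openU]) (auto intro: xid0 xid1)

lemma om_d: "y \<in> U \<Longrightarrow> (\<lambda>z. om z a) differentiable (at y)"
  unfolding lower_def by (intro differentiable_sum ballI differentiable_mult gd0 xid0) auto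

lemma dom: "y \<in> U \<Longrightarrow> pd b (\<lambda>z. om z c) y =
   (\<Sum>e\<in>UNIV. pd b (\<lambda>z. g z c e) y * xi y e + g y c e * pd b (\<lambda>z. xi z e) y)"
  unfolding lower_def
  by (subst pd_sum) (auto intro!: sum.cong pd_mult differentiable_mult gd0 xid0)

lemma dom_d: "y \<in> U \<Longrightarrow> pd b (\<lambda>z. om z c) differentiable (at y)"
  apply (rule diff_local[OF openU _ dom], assumption, assumption)
  by (intro differentiable_sum ballI differentiable_mult differentiable_add gd0 gd1 xid0 xid1) auto

lemma ddom: "x \<in> U \<Longrightarrow> pd d (pd b (\<lambda>z. om z c)) x =
   (\<Sum>e\<in>UNIV. S2 x d b c e * xi x e + pd b (\<lambda>z. g z c e) x * pd d (\<lambda>z. xi z e) x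
      + (pd d (\<lambda>z. g z c e) x * pd b (\<lambda>z. xi z e) x + g x c e * pd d (pd b (\<lambda>z. xi z e)) x))"
proof -
  assume x: "x \<in> U"
  have "pd d (pd b (\<lambda>z. om z c)) x =
     pd d (\<lambda>y. \<Sum>e\<in>UNIV. pd b (\<lambda>z. g z c e) y * xi y e + g y c e * pd b (\<lambda>z. xi z e) y) x"
    by (rule pd_local[OF openU x]) (simp add: dom)
  also have "\<dots> = (\<Sum>e\<in>UNIV. pd d (\<lambda>y. pd b (\<lambda>z. g z c e) y * xi y e + g y c e * pd b (\<lambda>z. xi z e) y) x)"
    by (rule pd_sum) (auto intro!: differentiable_add differentiable_mult gd0 gd1 xid0 xid1 x)
  also have "\<dots> = (\<Sum>e\<in>UNIV. S2 x d b c e * xi x e + pd b (\<lambda>z. g z c e) x * pd d (\<lambda>z. xi z e) x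
      + (pd d (\<lambda>z. g z c e) x * pd b (\<lambda>z. xi z e) x + g x c e * pd d (pd b (\<lambda>z. xi z e)) x))"
    by (intro sum.cong refl, subst pd_add) (auto intro!: differentiable_mult gd0 gd1 xid0 xid1 x simp: pd_mult gd0[OF x] gd1[OF x] xid0[OF x] xid1[OF x])
  finally show ?thesis .
qed

lemma ddom_sym: "x \<in> U \<Longrightarrow> pd d (pd b (\<lambda>z. om z c)) x = pd b (pd d (\<lambda>z. om z c)) x"
  unfolding ddom by (intro sum.cong refl) (simp add: g_schwarz[of x d b] xi_schwarz[of x d b] algebra_simps)

lemma F_x: "Fk y p q = pd p (\<lambda>z. om z q) y - (\<Sum>f\<in>UNIV. christoffel g y f p q * om y f)"
  unfolding cov_deriv_form_def by simp

lemma F_d: "y \<in> U \<Longrightarrow> (\<lambda>z. Fk z b c) differentiable (at y)"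
  unfolding cov_deriv_form_def
  by (intro differentiable_diff dom_d differentiable_sum ballI differentiable_mult chr_d om_d) auto

lemma F_anti: "y \<in> U \<Longrightarrow> Fk y a b = - Fk y b a"
  using kil unfolding killing_def by (simp add: eq_neg_iff_add_eq_0)

lemma pdF: "x \<in> U \<Longrightarrow> pd d (\<lambda>z. Fk z b c) x = pd d (pd b (\<lambda>z. om z c)) x
   - (\<Sum>e\<in>UNIV. pd d (\<lambda>z. christoffel g z e b c) x * om x e + christoffel g x e b c * pd d (\<lambda>z. om z e) x)"
proof -
  assume x: "x \<in> U"
  have "pd d (\<lambda>z. Fk z b c) x = pd d (pd b (\<lambda>z. om z c)) x
     - pd d (\<lambda>z. \<Sum>e\<in>UNIV. christoffel g z e b c * om z e) x"
    unfolding cov_deriv_form_def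
    by (rule pd_diff) (intro dom_d differentiable_sum ballI differentiable_mult chr_d om_d x finite)+
  also have "pd d (\<lambda>z. \<Sum>e\<in>UNIV. christoffel g z e b c * om z e) x =
     (\<Sum>e\<in>UNIV. pd d (\<lambda>z. christoffel g z e b c) x * om x e + christoffel g x e b c * pd d (\<lambda>z. om z e) x)"
    by (subst pd_sum) (auto intro!: sum.cong pd_mult differentiable_mult chr_d om_d x)
  finally show ?thesis .
qed

definition Sk where "Sk x d b c = pd d (\<lambda>z. Fk z b c) x
   - (\<Sum>e\<in>UNIV. christoffel g x e d b * Fk x e c) - (\<Sum>e\<in>UNIV. christoffel g x e d c * Fk x b e)"

lemma sum_F_swap1: "y \<in> U \<Longrightarrow> (\<Sum>e\<in>UNIV. h e * Fk y e b) = - (\<Sum>e\<in>UNIV. h e * Fk y b e)"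
proof -
  assume y: "y \<in> U"
  have "\<And>e. Fk y e b = - Fk y b e" by (rule F_anti[OF y])
  then show ?thesis by (simp add: sum_negf)
qed

lemma Sk_anti: "x \<in> U \<Longrightarrow> Sk x d b c = - Sk x d c b"
proof -
  assume x: "x \<in> U"
  have "pd d (\<lambda>z. Fk z b c) x = pd d (\<lambda>z. - Fk z c b) x"
    by (rule pd_local[OF openU x]) (rule F_anti)
  also have "\<dots> = - pd d (\<lambda>z. Fk z c b) x" by (rule pd_neg[OF F_d[OF x]])
  finally have 1: "pd d (\<lambda>z. Fk z b c) x = - pd d (\<lambda>z. Fk z c b) x" .
  show ?thesis unfolding Sk_def 1
    using sum_F_swap1[OF x, of "\<lambda>e. christoffel g x e d b" c] sum_F_swap1[OF x, of "\<lambda>e. christoffel g x e d c" b]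
    by simp
qed

lemma ricci: "x \<in> U \<Longrightarrow> Sk x d b c - Sk x b d c = - (\<Sum>e\<in>UNIV. om x e * riemann_up g x e c d b)"
proof -
  assume x: "x \<in> U"
  have cs: "(\<Sum>e\<in>UNIV. christoffel g x e d b * Fk x e c) = (\<Sum>e\<in>UNIV. christoffel g x e b d * Fk x e c)"
    by (intro sum.cong refl) (simp add: chr_sym[OF x])
  have L: "Sk x d b c - Sk x b d c =
     - (\<Sum>e\<in>UNIV. pd d (\<lambda>z. christoffel g z e b c) x * om x e) + (\<Sum>e\<in>UNIV. pd b (\<lambda>z. christoffel g z e d c) x * om x e)
     + (\<Sum>e\<in>UNIV. christoffel g x e d c * (\<Sum>f\<in>UNIV. christoffel g x f b e * om x f))
     - (\<Sum>e\<in>UNIV. christoffel g x e b c * (\<Sum>f\<in>UNIV. christoffel g x f d e * om x f))"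
    unfolding Sk_def pdF[OF x] cs ddom_sym[OF x, of d b c] F_x[of x b] F_x[of x d]
    by (simp add: algebra_simps sum.distrib sum_subtractf)
  have R: "- (\<Sum>e\<in>UNIV. om x e * riemann_up g x e c d b) =
     - (\<Sum>e\<in>UNIV. pd d (\<lambda>z. christoffel g z e b c) x * om x e) + (\<Sum>e\<in>UNIV. pd b (\<lambda>z. christoffel g z e d c) x * om x e)
     - (\<Sum>e\<in>UNIV. \<Sum>f\<in>UNIV. om x e * christoffel g x e d f * christoffel g x f b c)
     + (\<Sum>e\<in>UNIV. \<Sum>f\<in>UNIV. om x e * christoffel g x e b f * christoffel g x f d c)"
    unfolding riemann_up_def
    by (simp add: algebra_simps sum.distrib sum_subtractf sum_distrib_left)
  have s1: "(\<Sum>e\<in>UNIV. christoffel g x e d c * (\<Sum>f\<in>UNIV. christoffel g x f b e * om x f))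
      = (\<Sum>e\<in>UNIV. \<Sum>f\<in>UNIV. om x e * christoffel g x e b f * christoffel g x f d c)"
    apply (simp add: sum_distrib_left)
    apply (subst sum.swap)
    apply (simp add: mult_ac)
    done
  have s2: "(\<Sum>e\<in>UNIV. christoffel g x e b c * (\<Sum>f\<in>UNIV. christoffel g x f d e * om x f))
      = (\<Sum>e\<in>UNIV. \<Sum>f\<in>UNIV. om x e * christoffel g x e d f * christoffel g x f b c)"
    apply (simp add: sum_distrib_left)
    apply (subst sum.swap)
    apply (simp add: mult_ac)
    done
  show ?thesis unfolding L R s1 s2 by simp
qed

lemma killing_id: "x \<in> U \<Longrightarrow> Sk x d b c = (\<Sum>e\<in>UNIV. om x e * riemann_up g x e d b c)"
proof -
  assume x: "x \<in> U"
  define P where "P p q r = (\<Sum>e\<in>UNIV. om x e * riemann_up g x e p q r)" for p q r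
  have B: "P c d b + P d b c + P b c d = 0"
  proof -
    have "P c d b + P d b c + P b c d = (\<Sum>e\<in>UNIV. om x e * (riemann_up g x e c d b + riemann_up g x e d b c + riemann_up g x e b c d))"
      unfolding P_def by (simp add: algebra_simps sum.distrib)
    also have "\<dots> = 0" by (simp add: bianchi_up[OF x])
    finally show ?thesis .
  qed
  have r: "Sk x p q r - Sk x q p r = - P r p q" for p q r unfolding P_def by (rule ricci[OF x])
  have a: "Sk x p q r = - Sk x p r q" for p q r by (rule Sk_anti[OF x])
  show ?thesis
    using r[of d b c] r[of b c d] r[of c d b] a[of b d c] a[of c b d] a[of d c b] B
    unfolding P_def[symmetric] by linarith
qed

end



context kchart begin

lemma extd: "y \<in> U \<Longrightarrow> ext_d om y b c = 2 * Fk y b c"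
proof -
  assume y: "y \<in> U"
  have "Fk y c b = - Fk y b c" by (rule F_anti[OF y])
  moreover have "(\<Sum>f\<in>UNIV. christoffel g y f c b * om y f) = (\<Sum>f\<in>UNIV. christoffel g y f b c * om y f)"
    by (intro sum.cong refl) (simp add: chr_sym[OF y])
  ultimately show ?thesis unfolding ext_d_def F_x by simp
qed

lemma hs0: "y \<in> U \<Longrightarrow> om y a * Fk y b c + om y b * Fk y c a + om y c * Fk y a b = 0"
proof -
  assume y: "y \<in> U"
  have "wedge12 om (ext_d om) y a b c = 0" using hso y by blast
  then show ?thesis unfolding wedge12_def extd[OF y] by (simp add: algebra_simps)
qed

lemma pd_om: "x \<in> U \<Longrightarrow> pd d (\<lambda>z. om z p) x = Fk x d p + (\<Sum>e\<in>UNIV. christoffel g x e d p * om x e)"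
  unfolding F_x by simp

lemma pd_F: "x \<in> U \<Longrightarrow> pd d (\<lambda>z. Fk z b c) x = Sk x d b c
   + (\<Sum>e\<in>UNIV. christoffel g x e d b * Fk x e c) + (\<Sum>e\<in>UNIV. christoffel g x e d c * Fk x b e)"
  unfolding Sk_def by simp

lemma hs1: "x \<in> U \<Longrightarrow> Fk x d a * Fk x b c + Fk x d b * Fk x c a + Fk x d c * Fk x a b
   + om x a * Sk x d b c + om x b * Sk x d c a + om x c * Sk x d a b = 0"
proof -
  assume x: "x \<in> U"
  define W where "W y = om y a * Fk y b c + om y b * Fk y c a + om y c * Fk y a b" for y
  have "pd d W x = pd d (\<lambda>y. 0) x"
    by (rule pd_local[OF openU x]) (simp add: W_def hs0)
  then have W0: "pd d W x = 0" by (simp add: pd_const)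
  have dW: "pd d W x = (pd d (\<lambda>z. om z a) x * Fk x b c + om x a * pd d (\<lambda>z. Fk z b c) x)
     + (pd d (\<lambda>z. om z b) x * Fk x c a + om x b * pd d (\<lambda>z. Fk z c a) x)
     + (pd d (\<lambda>z. om z c) x * Fk x a b + om x c * pd d (\<lambda>z. Fk z a b) x)"
    unfolding W_def
    by (simp add: pd_add pd_mult differentiable_add differentiable_mult om_d F_d x)
  have G0: "(\<Sum>e\<in>UNIV. christoffel g x e d a * (om x e * Fk x b c + om x b * Fk x c e + om x c * Fk x e b)
      + christoffel g x e d b * (om x a * Fk x e c + om x e * Fk x c a + om x c * Fk x a e)
      + christoffel g x e d c * (om x a * Fk x b e + om x b * Fk x e a + om x e * Fk x a b)) = 0"
    by (simp add: hs0[OF x])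
  have "pd d W x = Fk x d a * Fk x b c + Fk x d b * Fk x c a + Fk x d c * Fk x a b
   + om x a * Sk x d b c + om x b * Sk x d c a + om x c * Sk x d a b
   + (\<Sum>e\<in>UNIV. christoffel g x e d a * (om x e * Fk x b c + om x b * Fk x c e + om x c * Fk x e b)
      + christoffel g x e d b * (om x a * Fk x e c + om x e * Fk x c a + om x c * Fk x a e)
      + christoffel g x e d c * (om x a * Fk x b e + om x b * Fk x e a + om x e * Fk x a b))"
    unfolding dW pd_om[OF x] pd_F[OF x]
    by (simp add: algebra_simps sum.distrib sum_distrib_left sum_distrib_right)
  then show ?thesis using W0 G0 by simp
qed

lemma FF0:
  assumes x: "x \<in> U" and i: "om x i \<noteq> 0"
  shows "Fk x d a * Fk x b c + Fk x d b * Fk x c a + Fk x d c * Fk x a b = 0"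
proof -
  have e: "om x i * Fk x p q = om x p * Fk x i q - om x q * Fk x i p" for p q
    using hs0[OF x, of i p q] F_anti[OF x, of q i] by (simp add: algebra_simps)
  have "(om x i * Fk x d a) * (om x i * Fk x b c) + (om x i * Fk x d b) * (om x i * Fk x c a)
      + (om x i * Fk x d c) * (om x i * Fk x a b) = 0"
    unfolding e by (simp add: algebra_simps)
  then have "(om x i * om x i) * (Fk x d a * Fk x b c + Fk x d b * Fk x c a + Fk x d c * Fk x a b) = 0"
    by (simp add: algebra_simps)
  then show ?thesis using i by simp
qed

definition Pk where "Pk x d b c = (\<Sum>e\<in>UNIV. om x e * riemann_up g x e d b c)"

lemma constraint:
  assumes x: "x \<in> U" and i: "om x i \<noteq> 0"
  shows "om x a * Pk x d b c + om x b * Pk x d c a + om x c * Pk x d a b = 0"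
  using hs1[OF x, of d a b c] FF0[OF x i, of d a b c] unfolding Pk_def killing_id[OF x] by simp

lemma Pk_riemann: "x \<in> U \<Longrightarrow> Pk x d b c = (\<Sum>e\<in>UNIV. xi x e * riemann g x e d b c)"
proof -
  assume x: "x \<in> U"
  have "(\<Sum>e\<in>UNIV. xi x e * riemann g x e d b c) = (\<Sum>e\<in>UNIV. \<Sum>f\<in>UNIV. xi x e * g x e f * riemann_up g x f d b c)"
    unfolding riemann_def by (simp add: sum_distrib_left mult_ac)
  also have "\<dots> = (\<Sum>f\<in>UNIV. \<Sum>e\<in>UNIV. xi x e * g x e f * riemann_up g x f d b c)" by (rule sum.swap)
  also have "\<dots> = (\<Sum>f\<in>UNIV. om x f * riemann_up g x f d b c)"
    unfolding lower_def by (simp add: sum_distrib_left sum_distrib_right g_sym[OF x] mult_ac)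
  finally show ?thesis unfolding Pk_def by simp
qed

end



lemma mv1: "(\<Sum>a\<in>UNIV. \<Sum>b\<in>UNIV. f a b) = (\<Sum>b\<in>UNIV. \<Sum>a\<in>UNIV. (f a b::real))"
  by (rule sum.swap)
lemma mv2: "(\<Sum>a\<in>UNIV. \<Sum>b\<in>UNIV. \<Sum>c\<in>UNIV. f a b c) = (\<Sum>b\<in>UNIV. \<Sum>c\<in>UNIV. \<Sum>a\<in>UNIV. (f a b c::real))"
  by (subst sum.swap) (rule sum.cong[OF refl], rule mv1)
lemma mv3: "(\<Sum>a\<in>UNIV. \<Sum>b\<in>UNIV. \<Sum>c\<in>UNIV. \<Sum>d\<in>UNIV. f a b c d) =
   (\<Sum>b\<in>UNIV. \<Sum>c\<in>UNIV. \<Sum>d\<in>UNIV. \<Sum>a\<in>UNIV. (f a b c d::real))"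
  by (subst sum.swap) (rule sum.cong[OF refl], rule mv2)
lemma mv4: "(\<Sum>a\<in>UNIV. \<Sum>b\<in>UNIV. \<Sum>c\<in>UNIV. \<Sum>d\<in>UNIV. \<Sum>e\<in>UNIV. f a b c d e) =
   (\<Sum>b\<in>UNIV. \<Sum>c\<in>UNIV. \<Sum>d\<in>UNIV. \<Sum>e\<in>UNIV. \<Sum>a\<in>UNIV. (f a b c d e::real))"
  by (subst sum.swap) (rule sum.cong[OF refl], rule mv3)
lemma mv5: "(\<Sum>a\<in>UNIV. \<Sum>b\<in>UNIV. \<Sum>c\<in>UNIV. \<Sum>d\<in>UNIV. \<Sum>e\<in>UNIV. \<Sum>k\<in>UNIV. f a b c d e k) =
   (\<Sum>b\<in>UNIV. \<Sum>c\<in>UNIV. \<Sum>d\<in>UNIV. \<Sum>e\<in>UNIV. \<Sum>k\<in>UNIV. \<Sum>a\<in>UNIV. (f a b c d e k::real))"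
  by (subst sum.swap) (rule sum.cong[OF refl], rule mv4)
lemma mv6: "(\<Sum>a\<in>UNIV. \<Sum>b\<in>UNIV. \<Sum>c\<in>UNIV. \<Sum>d\<in>UNIV. \<Sum>e\<in>UNIV. \<Sum>k\<in>UNIV. \<Sum>l\<in>UNIV. f a b c d e k l) =
   (\<Sum>b\<in>UNIV. \<Sum>c\<in>UNIV. \<Sum>d\<in>UNIV. \<Sum>e\<in>UNIV. \<Sum>k\<in>UNIV. \<Sum>l\<in>UNIV. \<Sum>a\<in>UNIV. (f a b c d e k l::real))"
  by (subst sum.swap) (rule sum.cong[OF refl], rule mv5)

definition belA :: "('n::finite \<Rightarrow> 'n \<Rightarrow> 'n \<Rightarrow> 'n \<Rightarrow> real) \<Rightarrow> ('n \<Rightarrow> 'n \<Rightarrow> real) \<Rightarrow> ('n \<Rightarrow> 'n \<Rightarrow> real)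
   \<Rightarrow> 'n \<Rightarrow> 'n \<Rightarrow> 'n \<Rightarrow> 'n \<Rightarrow> real" where
  "belA R h G al be la mu =
       (\<Sum>r\<in>UNIV. \<Sum>s\<in>UNIV. \<Sum>r'\<in>UNIV. \<Sum>s'\<in>UNIV. h r r' * h s s' *
          (R al r la s * R be r' mu s' + R al r mu s * R be r' la s'))
     - (1/2) * G al be * (\<Sum>r\<in>UNIV. \<Sum>t\<in>UNIV. \<Sum>s\<in>UNIV. \<Sum>r'\<in>UNIV. \<Sum>t'\<in>UNIV. \<Sum>s'\<in>UNIV.
          h r r' * h t t' * h s s' * R r t la s * R r' t' mu s')
     - (1/2) * G la mu * (\<Sum>r\<in>UNIV. \<Sum>s\<in>UNIV. \<Sum>t\<in>UNIV. \<Sum>r'\<in>UNIV. \<Sum>s'\<in>UNIV. \<Sum>t'\<in>UNIV.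
          h r r' * h s s' * h t t' * R al r s t * R be r' s' t')
     + (1/8) * G al be * G la mu *
         (\<Sum>r\<in>UNIV. \<Sum>t\<in>UNIV. \<Sum>s\<in>UNIV. \<Sum>n\<in>UNIV. \<Sum>r'\<in>UNIV. \<Sum>t'\<in>UNIV. \<Sum>s'\<in>UNIV. \<Sum>n'\<in>UNIV.
          h r r' * h t t' * h s s' * h n n' * R r t s n * R r' t' s' n')"

lemma bel_belA: "bel g x = belA (riemann g x) (ginv g x) (g x)"
  by (simp add: fun_eq_iff bel_def belA_def Let_def)

lemma sep3: "(\<Sum>a\<in>UNIV. \<Sum>b\<in>UNIV. \<Sum>c\<in>UNIV. k * f a b * h c) = k * (\<Sum>a\<in>UNIV. \<Sum>b\<in>UNIV. f a b) * (\<Sum>c\<in>UNIV. (h c::real))"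
  by (simp add: sum_distrib_left sum_distrib_right mult_ac)

lemma p_acb: "(\<Sum>a\<in>UNIV. \<Sum>b\<in>UNIV. \<Sum>c\<in>UNIV. f a c b) = (\<Sum>a\<in>UNIV. \<Sum>b\<in>UNIV. \<Sum>c\<in>UNIV. (f a b c::real))"
  by (rule sum.cong[OF refl], rule mv1)
lemma p_bac: "(\<Sum>a\<in>UNIV. \<Sum>b\<in>UNIV. \<Sum>c\<in>UNIV. f b a c) = (\<Sum>a\<in>UNIV. \<Sum>b\<in>UNIV. \<Sum>c\<in>UNIV. (f a b c::real))"
  by (rule mv1)
lemma p_bca: "(\<Sum>a\<in>UNIV. \<Sum>b\<in>UNIV. \<Sum>c\<in>UNIV. f b c a) = (\<Sum>a\<in>UNIV. \<Sum>b\<in>UNIV. \<Sum>c\<in>UNIV. (f a b c::real))"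
  by (rule mv2)
lemma p_cab: "(\<Sum>a\<in>UNIV. \<Sum>b\<in>UNIV. \<Sum>c\<in>UNIV. f c a b) = (\<Sum>a\<in>UNIV. \<Sum>b\<in>UNIV. \<Sum>c\<in>UNIV. (f a b c::real))"
  by (subst mv2, subst mv2, rule refl)
lemma p_cba: "(\<Sum>a\<in>UNIV. \<Sum>b\<in>UNIV. \<Sum>c\<in>UNIV. f c b a) = (\<Sum>a\<in>UNIV. \<Sum>b\<in>UNIV. \<Sum>c\<in>UNIV. (f a b c::real))"
  by (subst mv2, subst mv1, rule refl)

lemma sym6:
  fixes B :: "'n::finite \<Rightarrow> 'n \<Rightarrow> 'n \<Rightarrow> real"
  shows "(\<Sum>a\<in>UNIV. \<Sum>b\<in>UNIV. \<Sum>c\<in>UNIV. (1/6) * (B a b c + B a c b + B b a c + B b c a + B c a b + B c b a)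
     * X a * X b * X c) = (\<Sum>a\<in>UNIV. \<Sum>b\<in>UNIV. \<Sum>c\<in>UNIV. B a b c * X a * X b * X c)"
proof -
  define S where "S = (\<Sum>a\<in>UNIV. \<Sum>b\<in>UNIV. \<Sum>c\<in>UNIV. B a b c * X a * X b * X c)"
  define F where "F a b c = B a b c * X a * X b * X c" for a b c
  have 1: "(\<Sum>a\<in>UNIV. \<Sum>b\<in>UNIV. \<Sum>c\<in>UNIV. B a c b * X a * X b * X c) = S"
    using p_acb[of F] unfolding F_def S_def by (simp add: mult_ac)
  have 2: "(\<Sum>a\<in>UNIV. \<Sum>b\<in>UNIV. \<Sum>c\<in>UNIV. B b a c * X a * X b * X c) = S"
    using p_bac[of F] unfolding F_def S_def by (simp add: mult_ac)
  have 3: "(\<Sum>a\<in>UNIV. \<Sum>b\<in>UNIV. \<Sum>c\<in>UNIV. B b c a * X a * X b * X c) = S"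
    using p_bca[of F] unfolding F_def S_def by (simp add: mult_ac)
  have 4: "(\<Sum>a\<in>UNIV. \<Sum>b\<in>UNIV. \<Sum>c\<in>UNIV. B c a b * X a * X b * X c) = S"
    using p_cab[of F] unfolding F_def S_def by (simp add: mult_ac)
  have 5: "(\<Sum>a\<in>UNIV. \<Sum>b\<in>UNIV. \<Sum>c\<in>UNIV. B c b a * X a * X b * X c) = S"
    using p_cba[of F] unfolding F_def S_def by (simp add: mult_ac)
  have "(\<Sum>a\<in>UNIV. \<Sum>b\<in>UNIV. \<Sum>c\<in>UNIV. (1/6) * (B a b c + B a c b + B b a c + B b c a + B c a b + B c b a)
     * X a * X b * X c) = (1/6) * (S + (\<Sum>a\<in>UNIV. \<Sum>b\<in>UNIV. \<Sum>c\<in>UNIV. B a c b * X a * X b * X c)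
       + (\<Sum>a\<in>UNIV. \<Sum>b\<in>UNIV. \<Sum>c\<in>UNIV. B b a c * X a * X b * X c)
       + (\<Sum>a\<in>UNIV. \<Sum>b\<in>UNIV. \<Sum>c\<in>UNIV. B b c a * X a * X b * X c)
       + (\<Sum>a\<in>UNIV. \<Sum>b\<in>UNIV. \<Sum>c\<in>UNIV. B c a b * X a * X b * X c)
       + (\<Sum>a\<in>UNIV. \<Sum>b\<in>UNIV. \<Sum>c\<in>UNIV. B c b a * X a * X b * X c))"
    unfolding S_def by (simp add: sum.distrib sum_distrib_left algebra_simps)
  also have "\<dots> = S" unfolding 1 2 3 4 5 by simp
  finally show ?thesis unfolding S_def .
qed

locale alg =
  fixes R :: "'n::finite \<Rightarrow> 'n \<Rightarrow> 'n \<Rightarrow> 'n \<Rightarrow> real" and H G :: "'n \<Rightarrow> 'n \<Rightarrow> real"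
    and X L :: "'n \<Rightarrow> real" and i :: 'n
  assumes A1: "R a b c d = - R b a c d" and A2: "R a b c d = - R a b d c" and PS: "R a b c d = R c d a b"
    and Gs: "G a b = G b a" and Hs: "H a b = H b a"
    and HG: "(\<Sum>b\<in>UNIV. H a b * G b c) = (if a = c then 1 else 0)"
    and Ol: "L a = (\<Sum>b\<in>UNIV. G a b * X b)"
    and C: "L a * (\<Sum>e\<in>UNIV. X e * R e d b c) + L b * (\<Sum>e\<in>UNIV. X e * R e d c a)
       + L c * (\<Sum>e\<in>UNIV. X e * R e d a b) = 0"
    and Oi: "L i \<noteq> 0"
begin

definition "P d b c = (\<Sum>e\<in>UNIV. X e * R e d b c)"
definition "W d c = P d i c / L i"

lemma P_anti: "P d b c = - P d c b"
  unfolding P_def by (subst A2) (simp add: sum_negf)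

lemma Pdec: "P d b c = L b * W d c - L c * W d b"
proof -
  have "L i * P d b c + L b * P d c i + L c * P d i b = 0" using C[of i d b c] unfolding P_def .
  then have "L i * P d b c = L b * P d i c - L c * P d i b"
    using P_anti[of d c i] by (simp add: algebra_simps)
  then show ?thesis unfolding W_def using Oi by (simp add: field_simps)
qed

lemma Xup: "(\<Sum>b\<in>UNIV. H a b * L b) = X a"
proof -
  have "(\<Sum>b\<in>UNIV. H a b * L b) = (\<Sum>b\<in>UNIV. \<Sum>c\<in>UNIV. H a b * G b c * X c)"
    unfolding Ol by (simp add: sum_distrib_left mult_ac)
  also have "\<dots> = (\<Sum>c\<in>UNIV. \<Sum>b\<in>UNIV. H a b * G b c * X c)" by (rule sum.swap)
  also have "\<dots> = (\<Sum>c\<in>UNIV. (\<Sum>b\<in>UNIV. H a b * G b c) * X c)" by (simp add: sum_distrib_right)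
  also have "\<dots> = X a" by (simp only: HG delta_sum)
  finally show ?thesis .
qed

lemma Xup': "(\<Sum>b\<in>UNIV. L b * H b a) = X a"
  using Xup[of a] by (simp add: Hs mult.commute)

lemma Xup'': "(\<Sum>b\<in>UNIV. L b * H a b) = X a"
  using Xup[of a] by (simp add: mult.commute)

lemma anti_sum_zero:
  assumes "\<And>a b. f a b = - f b a"
  shows "(\<Sum>a\<in>UNIV. \<Sum>b\<in>UNIV. X a * X b * f a b) = 0"
proof -
  have "(\<Sum>a\<in>UNIV. \<Sum>b\<in>UNIV. X a * X b * f a b) = (\<Sum>b\<in>UNIV. \<Sum>a\<in>UNIV. X a * X b * f a b)" by (rule sum.swap)
  also have "\<dots> = (\<Sum>b\<in>UNIV. \<Sum>a\<in>UNIV. - (X b * X a * f b a))"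
    apply (intro sum.cong refl)
    subgoal for b a using assms[of a b] by simp
    done
  also have "\<dots> = - (\<Sum>b\<in>UNIV. \<Sum>a\<in>UNIV. X b * X a * f b a)" by (simp add: sum_negf)
  finally show ?thesis by simp
qed

lemma PXX: "(\<Sum>d\<in>UNIV. X d * P d b c) = 0"
proof -
  have "(\<Sum>d\<in>UNIV. X d * P d b c) = (\<Sum>d\<in>UNIV. \<Sum>e\<in>UNIV. X d * X e * R e d b c)"
    unfolding P_def by (simp add: sum_distrib_left mult_ac)
  also have "\<dots> = 0" by (rule anti_sum_zero) (rule A1)
  finally show ?thesis .
qed

definition "u c = (\<Sum>d\<in>UNIV. X d * W d c)"
definition "lam = u i / L i"

lemma u_lam: "u c = lam * L c"
proof -
  have "0 = (\<Sum>d\<in>UNIV. X d * (L i * W d c - L c * W d i))" using PXX[of i c] by (simp add: Pdec)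
  also have "\<dots> = L i * u c - L c * u i" unfolding u_def by (simp add: algebra_simps sum_subtractf sum_distrib_left)
  finally show ?thesis unfolding lam_def using Oi by (simp add: field_simps)
qed

lemma PX_anti: "(\<Sum>s\<in>UNIV. (\<Sum>c\<in>UNIV. X c * P r c s) * X s) = 0"
proof -
  have "(\<Sum>s\<in>UNIV. (\<Sum>c\<in>UNIV. X c * P r c s) * X s) = (\<Sum>s\<in>UNIV. \<Sum>c\<in>UNIV. X s * X c * P r c s)"
    by (simp add: sum_distrib_left sum_distrib_right mult_ac)
  also have "\<dots> = 0" by (rule anti_sum_zero) (rule P_anti)
  finally show ?thesis .
qed

definition "Ep r s = (\<Sum>c\<in>UNIV. X c * P r c s)"

lemma Ep_X: "(\<Sum>s\<in>UNIV. Ep r s * X s) = 0"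
  unfolding Ep_def by (rule PX_anti)

lemma I1: "(\<Sum>a\<in>UNIV. \<Sum>b\<in>UNIV. \<Sum>c\<in>UNIV. X a * X b * X c * (R a r c s * R b r' m s')) = Ep r s * P r' m s'"
proof -
  have "(\<Sum>a\<in>UNIV. \<Sum>b\<in>UNIV. \<Sum>c\<in>UNIV. X a * X b * X c * (R a r c s * R b r' m s'))
    = (\<Sum>b\<in>UNIV. \<Sum>c\<in>UNIV. \<Sum>a\<in>UNIV. X a * X b * X c * (R a r c s * R b r' m s'))" by (rule mv2)
  also have "\<dots> = (\<Sum>c\<in>UNIV. \<Sum>a\<in>UNIV. \<Sum>b\<in>UNIV. X a * X b * X c * (R a r c s * R b r' m s'))" by (rule mv2)
  also have "\<dots> = Ep r s * P r' m s'"
    unfolding Ep_def P_def by (simp add: sum_distrib_left sum_distrib_right mult_ac)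
  finally show ?thesis .
qed

lemma I2: "(\<Sum>a\<in>UNIV. \<Sum>b\<in>UNIV. \<Sum>c\<in>UNIV. X a * X b * X c * (R a r m s * R b r' c s')) = P r m s * Ep r' s'"
proof -
  have "(\<Sum>a\<in>UNIV. \<Sum>b\<in>UNIV. \<Sum>c\<in>UNIV. X a * X b * X c * (R a r m s * R b r' c s'))
    = (\<Sum>b\<in>UNIV. \<Sum>c\<in>UNIV. \<Sum>a\<in>UNIV. X a * X b * X c * (R a r m s * R b r' c s'))" by (rule mv2)
  also have "\<dots> = (\<Sum>c\<in>UNIV. \<Sum>b\<in>UNIV. \<Sum>a\<in>UNIV. X a * X b * X c * (R a r m s * R b r' c s'))" by (rule mv1)
  also have "\<dots> = P r m s * Ep r' s'"
    unfolding Ep_def P_def by (simp add: sum_distrib_left sum_distrib_right mult_ac)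
  finally show ?thesis .
qed

definition "E12 a b c m = (\<Sum>r\<in>UNIV. \<Sum>s\<in>UNIV. \<Sum>r'\<in>UNIV. \<Sum>s'\<in>UNIV.
   H r r' * H s s' * (R a r c s * R b r' m s' + R a r m s * R b r' c s'))"

lemma T12_step: "(\<Sum>a\<in>UNIV. \<Sum>b\<in>UNIV. \<Sum>c\<in>UNIV. X a * X b * X c * E12 a b c m) =
  (\<Sum>r\<in>UNIV. \<Sum>s\<in>UNIV. \<Sum>r'\<in>UNIV. \<Sum>s'\<in>UNIV. H r r' * H s s' * (Ep r s * P r' m s' + P r m s * Ep r' s'))"
proof -
  have "(\<Sum>a\<in>UNIV. \<Sum>b\<in>UNIV. \<Sum>c\<in>UNIV. X a * X b * X c * E12 a b c m) =
    (\<Sum>a\<in>UNIV. \<Sum>b\<in>UNIV. \<Sum>c\<in>UNIV. \<Sum>r\<in>UNIV. \<Sum>s\<in>UNIV. \<Sum>r'\<in>UNIV. \<Sum>s'\<in>UNIV.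
      X a * X b * X c * (H r r' * H s s' * (R a r c s * R b r' m s' + R a r m s * R b r' c s')))"
    unfolding E12_def by (simp only: sum_distrib_left)
  also have "\<dots> = (\<Sum>r\<in>UNIV. \<Sum>s\<in>UNIV. \<Sum>r'\<in>UNIV. \<Sum>s'\<in>UNIV. \<Sum>a\<in>UNIV. \<Sum>b\<in>UNIV. \<Sum>c\<in>UNIV.
      X a * X b * X c * (H r r' * H s s' * (R a r c s * R b r' m s' + R a r m s * R b r' c s')))"
    by (subst mv6, subst mv6, subst mv6, rule refl)
  also have "\<dots> = (\<Sum>r\<in>UNIV. \<Sum>s\<in>UNIV. \<Sum>r'\<in>UNIV. \<Sum>s'\<in>UNIV. H r r' * H s s' * (Ep r s * P r' m s' + P r m s * Ep r' s'))"
  proof (intro sum.cong refl)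
    fix r s r' s'
    have "(\<Sum>a\<in>UNIV. \<Sum>b\<in>UNIV. \<Sum>c\<in>UNIV. X a * X b * X c * (H r r' * H s s' * (R a r c s * R b r' m s' + R a r m s * R b r' c s')))
      = H r r' * H s s' * ((\<Sum>a\<in>UNIV. \<Sum>b\<in>UNIV. \<Sum>c\<in>UNIV. X a * X b * X c * (R a r c s * R b r' m s'))
         + (\<Sum>a\<in>UNIV. \<Sum>b\<in>UNIV. \<Sum>c\<in>UNIV. X a * X b * X c * (R a r m s * R b r' c s')))"
      by (simp add: sum_distrib_left sum.distrib algebra_simps)
    then show "(\<Sum>a\<in>UNIV. \<Sum>b\<in>UNIV. \<Sum>c\<in>UNIV. X a * X b * X c * (H r r' * H s s' * (R a r c s * R b r' m s' + R a r m s * R b r' c s')))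
      = H r r' * H s s' * (Ep r s * P r' m s' + P r m s * Ep r' s')" unfolding I1 I2 .
  qed
  finally show ?thesis .
qed

lemma Z1: "(\<Sum>r\<in>UNIV. \<Sum>s\<in>UNIV. \<Sum>r'\<in>UNIV. \<Sum>s'\<in>UNIV. H r r' * H s s' * Ep r s * L s' * W r' m) = 0"
proof -
  have "(\<Sum>r\<in>UNIV. \<Sum>s\<in>UNIV. \<Sum>r'\<in>UNIV. \<Sum>s'\<in>UNIV. H r r' * H s s' * Ep r s * L s' * W r' m)
     = (\<Sum>r\<in>UNIV. \<Sum>s\<in>UNIV. \<Sum>r'\<in>UNIV. (H r r' * Ep r s * W r' m) * (\<Sum>s'\<in>UNIV. H s s' * L s'))"
    by (simp add: sum_distrib_left mult_ac)
  also have "\<dots> = (\<Sum>r\<in>UNIV. \<Sum>s\<in>UNIV. \<Sum>r'\<in>UNIV. H r r' * Ep r s * W r' m * X s)"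
    by (simp add: Xup)
  also have "\<dots> = (\<Sum>r\<in>UNIV. \<Sum>r'\<in>UNIV. \<Sum>s\<in>UNIV. H r r' * Ep r s * W r' m * X s)"
    by (rule sum.cong[OF refl], rule mv1)
  also have "\<dots> = (\<Sum>r\<in>UNIV. \<Sum>r'\<in>UNIV. H r r' * W r' m * (\<Sum>s\<in>UNIV. Ep r s * X s))"
    by (simp add: sum_distrib_left mult_ac)
  also have "\<dots> = 0" by (simp add: Ep_X)
  finally show ?thesis .
qed

lemma Z2: "(\<Sum>r\<in>UNIV. \<Sum>s\<in>UNIV. \<Sum>r'\<in>UNIV. \<Sum>s'\<in>UNIV. H r r' * H s s' * L s * W r m * Ep r' s') = 0"
proof -
  have "(\<Sum>r\<in>UNIV. \<Sum>s\<in>UNIV. \<Sum>r'\<in>UNIV. \<Sum>s'\<in>UNIV. H r r' * H s s' * L s * W r m * Ep r' s')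
     = (\<Sum>r\<in>UNIV. \<Sum>r'\<in>UNIV. \<Sum>s'\<in>UNIV. \<Sum>s\<in>UNIV. H r r' * H s s' * L s * W r m * Ep r' s')"
    by (rule sum.cong[OF refl], rule mv2)
  also have "\<dots> = (\<Sum>r\<in>UNIV. \<Sum>r'\<in>UNIV. \<Sum>s'\<in>UNIV. (H r r' * W r m * Ep r' s') * (\<Sum>s\<in>UNIV. L s * H s s'))"
    by (simp add: sum_distrib_left mult_ac)
  also have "\<dots> = (\<Sum>r\<in>UNIV. \<Sum>r'\<in>UNIV. H r r' * W r m * (\<Sum>s'\<in>UNIV. Ep r' s' * X s'))"
    by (simp add: Xup' sum_distrib_left mult_ac)
  also have "\<dots> = 0" by (simp add: Ep_X)
  finally show ?thesis .
qed

definition "k12 = (\<Sum>r\<in>UNIV. \<Sum>s\<in>UNIV. \<Sum>r'\<in>UNIV. \<Sum>s'\<in>UNIV. H r r' * H s s' * (Ep r s * W r' s' + W r s * Ep r' s'))"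

lemma T12: "(\<Sum>a\<in>UNIV. \<Sum>b\<in>UNIV. \<Sum>c\<in>UNIV. X a * X b * X c * E12 a b c m) = L m * k12"
proof -
  have "(\<Sum>r\<in>UNIV. \<Sum>s\<in>UNIV. \<Sum>r'\<in>UNIV. \<Sum>s'\<in>UNIV. H r r' * H s s' * (Ep r s * P r' m s' + P r m s * Ep r' s'))
    = (\<Sum>r\<in>UNIV. \<Sum>s\<in>UNIV. \<Sum>r'\<in>UNIV. \<Sum>s'\<in>UNIV. L m * (H r r' * H s s' * (Ep r s * W r' s' + W r s * Ep r' s'))
        - H r r' * H s s' * Ep r s * L s' * W r' m - H r r' * H s s' * L s * W r m * Ep r' s')"
    by (intro sum.cong refl) (simp add: Pdec algebra_simps)
  also have "\<dots> = L m * k12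
      - (\<Sum>r\<in>UNIV. \<Sum>s\<in>UNIV. \<Sum>r'\<in>UNIV. \<Sum>s'\<in>UNIV. H r r' * H s s' * Ep r s * L s' * W r' m)
      - (\<Sum>r\<in>UNIV. \<Sum>s\<in>UNIV. \<Sum>r'\<in>UNIV. \<Sum>s'\<in>UNIV. H r r' * H s s' * L s * W r m * Ep r' s')"
    unfolding k12_def by (simp only: sum_subtractf sum_distrib_left)
  finally show ?thesis unfolding T12_step Z1 Z2 by simp
qed

definition "E3 c m = (\<Sum>r\<in>UNIV. \<Sum>t\<in>UNIV. \<Sum>s\<in>UNIV. \<Sum>r'\<in>UNIV. \<Sum>t'\<in>UNIV. \<Sum>s'\<in>UNIV.
   H r r' * H t t' * H s s' * R r t c s * R r' t' m s')"

lemma XR3: "(\<Sum>c\<in>UNIV. X c * R r t c s) = P s r t"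
  unfolding P_def by (intro sum.cong refl) (simp add: PS[of r t])

lemma T3_step1: "(\<Sum>c\<in>UNIV. X c * E3 c m) =
  (\<Sum>r\<in>UNIV. \<Sum>t\<in>UNIV. \<Sum>s\<in>UNIV. \<Sum>r'\<in>UNIV. \<Sum>t'\<in>UNIV. \<Sum>s'\<in>UNIV.
   H r r' * H t t' * H s s' * P s r t * R r' t' m s')"
proof -
  have "(\<Sum>c\<in>UNIV. X c * E3 c m) = (\<Sum>c\<in>UNIV. \<Sum>r\<in>UNIV. \<Sum>t\<in>UNIV. \<Sum>s\<in>UNIV. \<Sum>r'\<in>UNIV. \<Sum>t'\<in>UNIV. \<Sum>s'\<in>UNIV.
     X c * (H r r' * H t t' * H s s' * R r t c s * R r' t' m s'))"
    unfolding E3_def by (simp only: sum_distrib_left)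
  also have "\<dots> = (\<Sum>r\<in>UNIV. \<Sum>t\<in>UNIV. \<Sum>s\<in>UNIV. \<Sum>r'\<in>UNIV. \<Sum>t'\<in>UNIV. \<Sum>s'\<in>UNIV. \<Sum>c\<in>UNIV.
     X c * (H r r' * H t t' * H s s' * R r t c s * R r' t' m s'))"
    by (rule mv6)
  also have "\<dots> = (\<Sum>r\<in>UNIV. \<Sum>t\<in>UNIV. \<Sum>s\<in>UNIV. \<Sum>r'\<in>UNIV. \<Sum>t'\<in>UNIV. \<Sum>s'\<in>UNIV.
     (H r r' * H t t' * H s s' * R r' t' m s') * (\<Sum>c\<in>UNIV. X c * R r t c s))"
    by (simp add: sum_distrib_left mult_ac)
  also have "\<dots> = (\<Sum>r\<in>UNIV. \<Sum>t\<in>UNIV. \<Sum>s\<in>UNIV. \<Sum>r'\<in>UNIV. \<Sum>t'\<in>UNIV. \<Sum>s'\<in>UNIV.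
   H r r' * H t t' * H s s' * P s r t * R r' t' m s')"
    by (simp add: XR3 mult_ac)
  finally show ?thesis .
qed

definition "A3 m = (\<Sum>t\<in>UNIV. \<Sum>s\<in>UNIV. \<Sum>t'\<in>UNIV. \<Sum>s'\<in>UNIV. H t t' * H s s' * W s t * P t' m s')"

lemma T3_A: "(\<Sum>r\<in>UNIV. \<Sum>t\<in>UNIV. \<Sum>s\<in>UNIV. \<Sum>r'\<in>UNIV. \<Sum>t'\<in>UNIV. \<Sum>s'\<in>UNIV.
   H r r' * H t t' * H s s' * (L r * W s t) * R r' t' m s') = A3 m"
proof -
  have "(\<Sum>r\<in>UNIV. \<Sum>t\<in>UNIV. \<Sum>s\<in>UNIV. \<Sum>r'\<in>UNIV. \<Sum>t'\<in>UNIV. \<Sum>s'\<in>UNIV.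
   H r r' * H t t' * H s s' * (L r * W s t) * R r' t' m s') =
   (\<Sum>t\<in>UNIV. \<Sum>s\<in>UNIV. \<Sum>r'\<in>UNIV. \<Sum>t'\<in>UNIV. \<Sum>s'\<in>UNIV. \<Sum>r\<in>UNIV.
   H r r' * H t t' * H s s' * (L r * W s t) * R r' t' m s')" by (rule mv5)
  also have "\<dots> = (\<Sum>t\<in>UNIV. \<Sum>s\<in>UNIV. \<Sum>r'\<in>UNIV. \<Sum>t'\<in>UNIV. \<Sum>s'\<in>UNIV.
     (H t t' * H s s' * W s t * R r' t' m s') * (\<Sum>r\<in>UNIV. L r * H r r'))"
    by (simp add: sum_distrib_left mult_ac)
  also have "\<dots> = (\<Sum>t\<in>UNIV. \<Sum>s\<in>UNIV. \<Sum>r'\<in>UNIV. \<Sum>t'\<in>UNIV. \<Sum>s'\<in>UNIV.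
     H t t' * H s s' * W s t * (X r' * R r' t' m s'))"
    by (simp add: Xup' mult_ac)
  also have "\<dots> = (\<Sum>t\<in>UNIV. \<Sum>s\<in>UNIV. \<Sum>t'\<in>UNIV. \<Sum>s'\<in>UNIV. \<Sum>r'\<in>UNIV.
     H t t' * H s s' * W s t * (X r' * R r' t' m s'))"
    apply (rule sum.cong[OF refl], rule sum.cong[OF refl])
    by (rule mv2)
  also have "\<dots> = A3 m"
    unfolding A3_def P_def by (simp add: sum_distrib_left)
  finally show ?thesis .
qed

lemma T3_B: "(\<Sum>r\<in>UNIV. \<Sum>t\<in>UNIV. \<Sum>s\<in>UNIV. \<Sum>r'\<in>UNIV. \<Sum>t'\<in>UNIV. \<Sum>s'\<in>UNIV.
   H r r' * H t t' * H s s' * (L t * W s r) * R r' t' m s') = - A3 m"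
proof -
  have "(\<Sum>r\<in>UNIV. \<Sum>t\<in>UNIV. \<Sum>s\<in>UNIV. \<Sum>r'\<in>UNIV. \<Sum>t'\<in>UNIV. \<Sum>s'\<in>UNIV.
   H r r' * H t t' * H s s' * (L t * W s r) * R r' t' m s') =
   (\<Sum>r\<in>UNIV. \<Sum>s\<in>UNIV. \<Sum>r'\<in>UNIV. \<Sum>t'\<in>UNIV. \<Sum>s'\<in>UNIV. \<Sum>t\<in>UNIV.
   H r r' * H t t' * H s s' * (L t * W s r) * R r' t' m s')" by (rule sum.cong[OF refl]) (rule mv4)
  also have "\<dots> = (\<Sum>r\<in>UNIV. \<Sum>s\<in>UNIV. \<Sum>r'\<in>UNIV. \<Sum>t'\<in>UNIV. \<Sum>s'\<in>UNIV.
     (H r r' * H s s' * W s r * R r' t' m s') * (\<Sum>t\<in>UNIV. L t * H t t'))"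
    by (simp add: sum_distrib_left mult_ac)
  also have "\<dots> = (\<Sum>r\<in>UNIV. \<Sum>s\<in>UNIV. \<Sum>r'\<in>UNIV. \<Sum>t'\<in>UNIV. \<Sum>s'\<in>UNIV.
     H r r' * H s s' * W s r * (X t' * R r' t' m s'))"
    by (simp add: Xup' mult_ac)
  also have "\<dots> = (\<Sum>r\<in>UNIV. \<Sum>s\<in>UNIV. \<Sum>r'\<in>UNIV. \<Sum>s'\<in>UNIV. \<Sum>t'\<in>UNIV.
     H r r' * H s s' * W s r * (X t' * R r' t' m s'))"
    apply (rule sum.cong[OF refl], rule sum.cong[OF refl], rule sum.cong[OF refl])
    by (rule mv1)
  also have "\<dots> = (\<Sum>r\<in>UNIV. \<Sum>s\<in>UNIV. \<Sum>r'\<in>UNIV. \<Sum>s'\<in>UNIV.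
     H r r' * H s s' * W s r * (- P r' m s'))"
  proof (intro sum.cong refl)
    fix r s r' s'
    have "(\<Sum>t'\<in>UNIV. X t' * R r' t' m s') = - P r' m s'"
      unfolding P_def by (subst A1) (simp add: sum_negf)
    then show "(\<Sum>t'\<in>UNIV. H r r' * H s s' * W s r * (X t' * R r' t' m s')) = H r r' * H s s' * W s r * (- P r' m s')"
      by (simp add: sum_distrib_left[symmetric])
  qed
  also have "\<dots> = - A3 m" unfolding A3_def by (simp add: sum_negf)
  finally show ?thesis .
qed

lemma Z3: "(\<Sum>t\<in>UNIV. \<Sum>s\<in>UNIV. \<Sum>t'\<in>UNIV. \<Sum>s'\<in>UNIV. H t t' * H s s' * W s t * L s' * W t' m) = lam * lam * L m"
proof -
  have "(\<Sum>t\<in>UNIV. \<Sum>s\<in>UNIV. \<Sum>t'\<in>UNIV. \<Sum>s'\<in>UNIV. H t t' * H s s' * W s t * L s' * W t' m)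
     = (\<Sum>t\<in>UNIV. \<Sum>s\<in>UNIV. \<Sum>t'\<in>UNIV. (H t t' * W s t * W t' m) * (\<Sum>s'\<in>UNIV. H s s' * L s'))"
    by (simp add: sum_distrib_left mult_ac)
  also have "\<dots> = (\<Sum>t\<in>UNIV. \<Sum>s\<in>UNIV. \<Sum>t'\<in>UNIV. H t t' * W t' m * (X s * W s t))"
    by (simp add: Xup Xup'' mult_ac)
  also have "\<dots> = (\<Sum>t\<in>UNIV. \<Sum>t'\<in>UNIV. \<Sum>s\<in>UNIV. H t t' * W t' m * (X s * W s t))"
    by (rule sum.cong[OF refl]) (rule mv1)
  also have "\<dots> = (\<Sum>t\<in>UNIV. \<Sum>t'\<in>UNIV. H t t' * W t' m * u t)"
    unfolding u_def by (simp add: sum_distrib_left)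
  also have "\<dots> = (\<Sum>t'\<in>UNIV. \<Sum>t\<in>UNIV. H t t' * W t' m * u t)" by (rule mv1)
  also have "\<dots> = (\<Sum>t'\<in>UNIV. (lam * W t' m) * (\<Sum>t\<in>UNIV. L t * H t t'))"
    by (simp add: u_lam sum_distrib_left mult_ac)
  also have "\<dots> = lam * u m" unfolding u_def by (simp add: Xup' sum_distrib_left mult_ac)
  finally show ?thesis by (simp add: u_lam)
qed

definition "k3 = (\<Sum>t\<in>UNIV. \<Sum>s\<in>UNIV. \<Sum>t'\<in>UNIV. \<Sum>s'\<in>UNIV. H t t' * H s s' * W s t * W t' s')"

lemma A3_val: "A3 m = L m * k3 - lam * lam * L m"
proof -
  have "A3 m = (\<Sum>t\<in>UNIV. \<Sum>s\<in>UNIV. \<Sum>t'\<in>UNIV. \<Sum>s'\<in>UNIV. L m * (H t t' * H s s' * W s t * W t' s')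
     - H t t' * H s s' * W s t * L s' * W t' m)"
    unfolding A3_def by (intro sum.cong refl) (simp add: Pdec algebra_simps)
  also have "\<dots> = L m * k3 - (\<Sum>t\<in>UNIV. \<Sum>s\<in>UNIV. \<Sum>t'\<in>UNIV. \<Sum>s'\<in>UNIV. H t t' * H s s' * W s t * L s' * W t' m)"
    unfolding k3_def by (simp only: sum_subtractf sum_distrib_left)
  finally show ?thesis unfolding Z3 .
qed

lemma T3: "(\<Sum>c\<in>UNIV. X c * E3 c m) = 2 * (L m * k3 - lam * lam * L m)"
proof -
  have "(\<Sum>c\<in>UNIV. X c * E3 c m) =
    (\<Sum>r\<in>UNIV. \<Sum>t\<in>UNIV. \<Sum>s\<in>UNIV. \<Sum>r'\<in>UNIV. \<Sum>t'\<in>UNIV. \<Sum>s'\<in>UNIV.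
      H r r' * H t t' * H s s' * (L r * W s t) * R r' t' m s' - H r r' * H t t' * H s s' * (L t * W s r) * R r' t' m s')"
    unfolding T3_step1 by (intro sum.cong refl) (simp add: Pdec algebra_simps)
  also have "\<dots> = (\<Sum>r\<in>UNIV. \<Sum>t\<in>UNIV. \<Sum>s\<in>UNIV. \<Sum>r'\<in>UNIV. \<Sum>t'\<in>UNIV. \<Sum>s'\<in>UNIV.
      H r r' * H t t' * H s s' * (L r * W s t) * R r' t' m s') - (\<Sum>r\<in>UNIV. \<Sum>t\<in>UNIV. \<Sum>s\<in>UNIV. \<Sum>r'\<in>UNIV. \<Sum>t'\<in>UNIV. \<Sum>s'\<in>UNIV.
      H r r' * H t t' * H s s' * (L t * W s r) * R r' t' m s')"
    by (simp only: sum_subtractf)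
  also have "\<dots> = A3 m - (- A3 m)" by (simp only: T3_A T3_B)
  finally show ?thesis unfolding A3_val by simp
qed

definition "E4 a b = (\<Sum>r\<in>UNIV. \<Sum>s\<in>UNIV. \<Sum>t\<in>UNIV. \<Sum>r'\<in>UNIV. \<Sum>s'\<in>UNIV. \<Sum>t'\<in>UNIV.
          H r r' * H s s' * H t t' * R a r s t * R b r' s' t')"
definition "KK = (\<Sum>r\<in>UNIV. \<Sum>t\<in>UNIV. \<Sum>s\<in>UNIV. \<Sum>n\<in>UNIV. \<Sum>r'\<in>UNIV. \<Sum>t'\<in>UNIV. \<Sum>s'\<in>UNIV. \<Sum>n'\<in>UNIV.
          H r r' * H t t' * H s s' * H n n' * R r t s n * R r' t' s' n')"

lemma belA_dec: "belA R H G a b c m = E12 a b c m - 1/2 * G a b * E3 c m - 1/2 * G c m * E4 a b + 1/8 * G a b * G c m * KK"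
  unfolding belA_def E12_def E3_def E4_def KK_def by simp

lemma XG: "(\<Sum>c\<in>UNIV. X c * G c m) = L m"
  unfolding Ol by (simp add: Gs mult.commute)

lemma J_prop: "(\<Sum>a\<in>UNIV. \<Sum>b\<in>UNIV. \<Sum>c\<in>UNIV. belA R H G a b c m * X a * X b * X c) =
   L m * (k12 - 1/2 * (\<Sum>a\<in>UNIV. \<Sum>b\<in>UNIV. X a * X b * G a b) * (2 * (k3 - lam * lam))
     - 1/2 * (\<Sum>a\<in>UNIV. \<Sum>b\<in>UNIV. X a * X b * E4 a b) + 1/8 * KK * (\<Sum>a\<in>UNIV. \<Sum>b\<in>UNIV. X a * X b * G a b))"
proof -
  have "(\<Sum>a\<in>UNIV. \<Sum>b\<in>UNIV. \<Sum>c\<in>UNIV. belA R H G a b c m * X a * X b * X c) =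
    (\<Sum>a\<in>UNIV. \<Sum>b\<in>UNIV. \<Sum>c\<in>UNIV. X a * X b * X c * E12 a b c m
      - (1/2) * (X a * X b * G a b) * (X c * E3 c m) - (1/2) * (X a * X b * E4 a b) * (X c * G c m)
      + (1/8 * KK) * (X a * X b * G a b) * (X c * G c m))"
    by (intro sum.cong refl) (simp add: belA_dec algebra_simps)
  also have "\<dots> = (\<Sum>a\<in>UNIV. \<Sum>b\<in>UNIV. \<Sum>c\<in>UNIV. X a * X b * X c * E12 a b c m)
      - (\<Sum>a\<in>UNIV. \<Sum>b\<in>UNIV. \<Sum>c\<in>UNIV. (1/2) * (X a * X b * G a b) * (X c * E3 c m))
      - (\<Sum>a\<in>UNIV. \<Sum>b\<in>UNIV. \<Sum>c\<in>UNIV. (1/2) * (X a * X b * E4 a b) * (X c * G c m))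
      + (\<Sum>a\<in>UNIV. \<Sum>b\<in>UNIV. \<Sum>c\<in>UNIV. (1/8 * KK) * (X a * X b * G a b) * (X c * G c m))"
    by (simp only: sum.distrib sum_subtractf)
  also have "\<dots> = L m * k12 - (1/2) * (\<Sum>a\<in>UNIV. \<Sum>b\<in>UNIV. X a * X b * G a b) * (2 * (L m * k3 - lam * lam * L m))
      - (1/2) * (\<Sum>a\<in>UNIV. \<Sum>b\<in>UNIV. X a * X b * E4 a b) * L m
      + (1/8 * KK) * (\<Sum>a\<in>UNIV. \<Sum>b\<in>UNIV. X a * X b * G a b) * L m"
    by (simp only: sep3 T12 T3 XG)
  finally show ?thesis by (simp add: algebra_simps)
qed

end


theorem mainTheorem4:
  fixes U :: "(real ^ 4) set"
    and g :: "real ^ 4 \<Rightarrow> 4 \<Rightarrow> 4 \<Rightarrow> real"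
    and xi :: "real ^ 4 \<Rightarrow> 4 \<Rightarrow> real"
  assumes "spacetime_chart U g"
    and "killing U g xi"
    and "\<forall>x\<in>U. \<forall>a b c. wedge12 (lower g xi) (ext_d (lower g xi)) x a b c = 0"
  shows "\<forall>x\<in>U. \<forall>a b. wedge11 (bel_current g xi) (lower g xi) x a b = 0"
proof -
  interpret kchart U g xi
    using assms by unfold_locales auto
  show ?thesis
  proof (intro ballI allI)
    fix x a b assume x: "x \<in> U"
    show "wedge11 (bel_current g xi) (lower g xi) x a b = 0"
    proof (cases "\<exists>i. lower g xi x i \<noteq> 0")
      case False then show ?thesis by (simp add: wedge11_def)
    next
      case True
      then obtain i where i: "lower g xi x i \<noteq> 0" by blast
      interpret A: alg "riemann g x" "ginv g x" "g x" "xi x" "lower g xi x" i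
      proof unfold_locales
        show "riemann g x a b c d = - riemann g x b a c d" for a b c d by (rule riemann_antisym1[OF x])
        show "riemann g x a b c d = - riemann g x a b d c" for a b c d by (rule riemann_antisym2)
        show "riemann g x a b c d = riemann g x c d a b" for a b c d by (rule riemann_pair[OF x])
        show "g x a b = g x b a" for a b by (rule g_sym[OF x])
        show "ginv g x a b = ginv g x b a" for a b by (rule ginv_sym[OF x])
        show "(\<Sum>b\<in>UNIV. ginv g x a b * g x b c) = (if a = c then 1 else 0)" for a c by (rule ginv_g[OF x])
        show "lower g xi x a = (\<Sum>b\<in>UNIV. g x a b * xi x b)" for a by (simp add: lower_def)
        show "lower g xi x a * (\<Sum>e\<in>UNIV. xi x e * riemann g x e d b c) + lower g xi x b * (\<Sum>e\<in>UNIV. xi x e * riemann g x e d c a)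
           + lower g xi x c * (\<Sum>e\<in>UNIV. xi x e * riemann g x e d a b) = 0" for a b c d
          using constraint[OF x i, of a d b c] by (simp add: Pk_riemann[OF x])
        show "lower g xi x i \<noteq> 0" by (rule i)
      qed
      have J: "bel_current g xi x m = lower g xi x m * (A.k12 - 1/2 * (\<Sum>a\<in>UNIV. \<Sum>b\<in>UNIV. xi x a * xi x b * g x a b) * (2 * (A.k3 - A.lam * A.lam))
         - 1/2 * (\<Sum>a\<in>UNIV. \<Sum>b\<in>UNIV. xi x a * xi x b * A.E4 a b) + 1/8 * A.KK * (\<Sum>a\<in>UNIV. \<Sum>b\<in>UNIV. xi x a * xi x b * g x a b))" for m
      proof -
        have "bel_current g xi x m = (\<Sum>a\<in>UNIV. \<Sum>b\<in>UNIV. \<Sum>c\<in>UNIV. bel g x a b c m * xi x a * xi x b * xi x c)"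
          unfolding bel_current_def bel_current3_def by (rule sym6)
        then show ?thesis unfolding bel_belA A.J_prop .
      qed
      show ?thesis unfolding wedge11_def J by simp
    qed
  qed
qed

end
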